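(* Let $I=(0,1)$ and let $\Omega\subset\mathbb R^d$ be a bounded Lipschitz domain. Let $\mathbf D=\mathbf D^\top\in\mathbb R^{d\times d}$ be positive definite and $c\ge 0$, and set $a(\eta,\zeta):=\int_\Omega \mathbf D\nabla\eta\cdot\nabla\zeta+c\,\eta\zeta\,\mathrm d\vec x$ for $\eta,\zeta\in H^1_0(\Omega)$. Fix $p_t,p_{\vec x}\in\mathbb N$, a partition $\mathcal T_I$ of $I$ into subintervals and a conforming triangulation $\mathcal T_\Omega$ of $\Omega$. Let $X_t:=H^1(I)\cap\mathbb P^{-1}_{p_t}(\mathcal T_I)$ with Lagrange basis $\Phi_t=(\varphi_1,\dots,\varphi_{N_t})$, $X_{\vec x}:=H^1_0(\Omega)\cap\mathbb P^{-1}_{p_{\vec x}}(\mathcal T_\Omega)$ with Lagrange basis $\Phi_{\vec x}=(\psi_1,\dots,\psi_{N_{\vec x}})$, and $Y_t:=\mathbb P^{-1}_{p_t}(\mathcal T_I)$ with an $L_2(I)$-orthogonal basis $\Xi=(\xi_1,\dots,\xi_{M_t})$. Put $X^\delta:=X_t\otimes X_{\vec x}$, $Y^\delta:=Y_t\otimes X_{\vec x}$, and for $w\in X^\delta$, $v\in Y^\delta$ let $(Bw)(v):=\int_I \langle \partial_t w(t),v(t)\rangle_{L_2(\Omega)}+a(w(t),v(t))\,\mathrm dt$. Let $\mathbf O_{ij}:=\int_I\xi_j\xi_i$, let $\mathbf K_{\vec x}\in\mathbb R^{N_{\vec x}\times N_{\vec x}}$ be symmetric positive definite, $\mathbf K_Y:=\mathbf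 O^{-1}\otimes\mathbf K_{\vec x}$, and define $K_Y^\delta:(Y^\delta)'\to Y^\delta$ by $K_Y^\delta\ell:=\sum_{(j,l),(j',l')}(\mathbf K_Y)_{(j,l),(j',l')}\,\ell(\xi_{j'}\otimes\psi_{l'})\,\xi_j\otimes\psi_l$. For $u,w\in X^\delta$ let $(S^\delta u)(w):=(Bw)\big(K_Y^\delta((Bu)|_{Y^\delta})\big)+\langle u(0),w(0)\rangle_{L_2(\Omega)}$, and let $\mathbf S_{(i,k),(i',k')}:=(S^\delta(\varphi_{i'}\otimes\psi_{k'}))(\varphi_i\otimes\psi_k)$. Define $(\mathbf L)_{ij}:=\int_I\varphi_j'\varphi_i$, $(\mathbf M_t)_{ij}:=\int_I\varphi_j\varphi_i$, $(\mathbf A_t)_{ij}:=\int_I\varphi_j'\varphi_i'$, $(\mathbf\Gamma_0)_{ij}:=\varphi_i(0)\varphi_j(0)$, $(\mathbf M_{\vec x})_{kl}:=\int_\Omega\psi_l\psi_k$ and $(\mathbf A_{\vec x})_{kl}:=\int_\Omega\mathbf D\nabla\psi_l\cdot\nabla\psi_k+c\,\psi_l\psi_k$. Then \[ \mathbf S=\mathbf A_t\otimes(\mathbf M_{\vec x}\mathbf K_{\vec x}\mathbf M_{\vec x})+\mathbf M_t\otimes(\mathbf A_{\vec x}\mathbf K_{\vec x}\mathbf A_{\vec x})+\mathbf L^\top\otimes(\mathbf M_{\vec x}\mathbf K_{\vec x}\mathbf A_{\vec x})+\mathbf L\otimes(\mathbf A_{\vec x}\mathbf K_{\vec x}\mathbf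 M_{\vec x})+\mathbf\Gamma_0\otimes\mathbf M_{\vec x}. \] In particular, $\mathbf S$ does not depend on the choice of $Y_t$ (among spaces containing $X_t$ and $\tfrac{\mathrm d}{\mathrm dt}X_t$) nor on the choice of its orthogonal basis $\Xi$.
   Context: $\mathbb P^{-1}_p(\mathcal T)$ denotes the space of (possibly discontinuous) piecewise polynomials of degree at most $p$ on the partition $\mathcal T$; note $X_t\subset Y_t$ and $\tfrac{\mathrm d}{\mathrm dt}X_t\subset Y_t$. Kronecker products use index pairs with the time index outer: $(\mathbf P\otimes\mathbf Q)_{(i,k),(j,l)}=\mathbf P_{ij}\mathbf Q_{kl}$. *)

theory Defs
  imports "HOL-Analysis.Analysis" "HOL-Computational_Algebra.Polynomial"
begin

definition interval_partition :: "real list \<Rightarrow> bool" where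
  "interval_partition ts \<longleftrightarrow> length ts \<ge> 2 \<and> sorted_wrt (<) ts \<and> hd ts = 0 \<and> last ts = 1"

definition pw_poly_1d :: "nat \<Rightarrow> real list \<Rightarrow> (real \<Rightarrow> real) \<Rightarrow> bool" where
  "pw_poly_1d p ts f \<longleftrightarrow>
     (\<forall>m < length ts - 1. \<exists>q :: real poly. degree q \<le> p \<and>
        (\<forall>t \<in> {ts!m <..< ts!(Suc m)}. f t = poly q t))"

definition Yt_space :: "nat \<Rightarrow> real list \<Rightarrow> (real \<Rightarrow> real) set" where
  "Yt_space p ts = {f. pw_poly_1d p ts f}"

text \<open>X_t = H^1(I) \<inter> P^{-1}_p(T_I), i.e. piecewise polynomials whose representative is
  continuous on the closed interval [0,1] (the continuous representative is used so that
  point values, e.g. at t=0, are meaningful).\<close>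
definition Xt_space :: "nat \<Rightarrow> real list \<Rightarrow> (real \<Rightarrow> real) set" where
  "Xt_space p ts = {f. pw_poly_1d p ts f \<and> continuous_on {0..1} f}"

definition l2I :: "(real \<Rightarrow> real) \<Rightarrow> (real \<Rightarrow> real) \<Rightarrow> real" where
  "l2I f g = (LINT t:{0<..<1}|lborel. f t * g t)"

definition L2I :: "(real \<Rightarrow> real) set" where
  "L2I = {f. set_borel_measurable lborel {0<..<1} f \<and> set_integrable lborel {0<..<1} (\<lambda>t. (f t)\<^sup>2)}"

definition L2I_orthogonal_basis :: "(real \<Rightarrow> real) set \<Rightarrow> nat \<Rightarrow> (nat \<Rightarrow> real \<Rightarrow> real) \<Rightarrow> bool" where
  "L2I_orthogonal_basis Y M \<xi> \<longleftrightarrow>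
     (\<forall>j<M. \<xi> j \<in> Y) \<and>
     (\<forall>j<M. l2I (\<xi> j) (\<xi> j) \<noteq> 0) \<and>
     (\<forall>j<M. \<forall>j'<M. j \<noteq> j' \<longrightarrow> l2I (\<xi> j) (\<xi> j') = 0) \<and>
     (\<forall>f\<in>Y. \<exists>a. AE t in lborel. t \<in> {0<..<1} \<longrightarrow> f t = (\<Sum>j<M. a j * \<xi> j t))"

definition lagrange_basis :: "'a set \<Rightarrow> ('a \<Rightarrow> real) set \<Rightarrow> nat \<Rightarrow> (nat \<Rightarrow> 'a \<Rightarrow> real) \<Rightarrow> bool" where
  "lagrange_basis S X N \<phi> \<longleftrightarrow>
     (\<forall>i<N. \<phi> i \<in> X) \<and>
     (\<exists>\<tau>. (\<forall>j<N. \<tau> j \<in> S) \<and> (\<forall>i<N. \<forall>j<N. \<phi> i (\<tau> j) = (if i = j then 1 else 0))) \<and>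
     (\<forall>f\<in>X. \<exists>a. \<forall>x\<in>S. f x = (\<Sum>i<N. a i * \<phi> i x))"

definition lipschitz_domain :: "(real^'n) set \<Rightarrow> bool" where
  "lipschitz_domain \<Omega> \<longleftrightarrow> open \<Omega> \<and> connected \<Omega> \<and> \<Omega> \<noteq> {} \<and>
     (\<forall>x\<in>frontier \<Omega>. \<exists>r>0. \<exists>e (g :: real^'n \<Rightarrow> real) L.
        norm e = 1 \<and> L-lipschitz_on UNIV g \<and> (\<forall>y s. g (y + s *\<^sub>R e) = g y) \<and>
        \<Omega> \<inter> ball x r = {y \<in> ball x r. y \<bullet> e < g y})"

definition conforming_triangulation :: "(real^'n) set \<Rightarrow> (real^'n) set set \<Rightarrow> bool" where
  "conforming_triangulation \<Omega> T \<longleftrightarrow> finite T \<and>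
     (\<forall>K\<in>T. int CARD('n) simplex K) \<and> \<Union>T = closure \<Omega> \<and>
     (\<forall>K\<in>T. \<forall>K'\<in>T. (K \<inter> K') face_of K \<and> (K \<inter> K') face_of K')"

definition mpoly_fun :: "nat \<Rightarrow> (real^'n \<Rightarrow> real) \<Rightarrow> bool" where
  "mpoly_fun p q \<longleftrightarrow> (\<exists>a :: ('n \<Rightarrow> nat) \<Rightarrow> real. \<forall>x.
     q x = (\<Sum>\<alpha>\<in>{\<alpha>. sum \<alpha> UNIV \<le> p}. a \<alpha> * (\<Prod>i\<in>UNIV. (x $ i) ^ \<alpha> i)))"

definition pw_poly_T :: "nat \<Rightarrow> (real^'n) set set \<Rightarrow> (real^'n \<Rightarrow> real) \<Rightarrow> bool" where
  "pw_poly_T p T f \<longleftrightarrow> (\<forall>K\<in>T. \<exists>q. mpoly_fun p q \<and> (\<forall>x\<in>interior K. f x = q x))"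

text \<open>X_x = H^1_0(\<Omega>) \<inter> P^{-1}_p(T_\<Omega>): for a conforming triangulation these are exactly the
  piecewise polynomials that are continuous on the closure of \<Omega> and vanish on its boundary
  (continuous representative).\<close>
definition Xx_space :: "(real^'n) set \<Rightarrow> (real^'n) set set \<Rightarrow> nat \<Rightarrow> (real^'n \<Rightarrow> real) set" where
  "Xx_space \<Omega> T p = {f. pw_poly_T p T f \<and> continuous_on (closure \<Omega>) f \<and> (\<forall>x\<in>frontier \<Omega>. f x = 0)}"

text \<open>Gradient (vector of partial derivatives; for the functions at hand it coincides
  a.e. with the weak gradient).\<close>
definition grad :: "(real^'n \<Rightarrow> real) \<Rightarrow> real^'n \<Rightarrow> real^'n" where
  "grad f x = (\<chi> i. deriv (\<lambda>s. f (x + s *\<^sub>R axis i 1)) 0)"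

definition l2O :: "(real^'n) set \<Rightarrow> (real^'n \<Rightarrow> real) \<Rightarrow> (real^'n \<Rightarrow> real) \<Rightarrow> real" where
  "l2O \<Omega> f g = (LINT x:\<Omega>|lborel. f x * g x)"

definition aform :: "(real^'n) set \<Rightarrow> real^'n^'n \<Rightarrow> real \<Rightarrow> (real^'n \<Rightarrow> real) \<Rightarrow> (real^'n \<Rightarrow> real) \<Rightarrow> real" where
  "aform \<Omega> D c \<eta> \<zeta> = (LINT x:\<Omega>|lborel. (D *v grad \<eta> x) \<bullet> grad \<zeta> x + c * \<eta> x * \<zeta> x)"

definition tens :: "(real \<Rightarrow> real) \<Rightarrow> (real^'n \<Rightarrow> real) \<Rightarrow> real \<Rightarrow> real^'n \<Rightarrow> real" where
  "tens f g = (\<lambda>t x. f t * g x)"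

definition Bform :: "(real^'n) set \<Rightarrow> real^'n^'n \<Rightarrow> real \<Rightarrow>
    (real \<Rightarrow> real^'n \<Rightarrow> real) \<Rightarrow> (real \<Rightarrow> real^'n \<Rightarrow> real) \<Rightarrow> real" where
  "Bform \<Omega> D c w v = (LINT t:{0<..<1}|lborel.
      l2O \<Omega> (\<lambda>x. deriv (\<lambda>s. w s x) t) (v t) + aform \<Omega> D c (w t) (v t))"

text \<open>Kronecker product with index pairs, time index outer.\<close>
definition kron :: "(nat \<Rightarrow> nat \<Rightarrow> real) \<Rightarrow> (nat \<Rightarrow> nat \<Rightarrow> real) \<Rightarrow> nat \<times> nat \<Rightarrow> nat \<times> nat \<Rightarrow> real" where
  "kron P Q = (\<lambda>(i, k) (j, l). P i j * Q k l)"

definition mmul :: "nat \<Rightarrow> (nat \<Rightarrow> nat \<Rightarrow> real) \<Rightarrow> (nat \<Rightarrow> nat \<Rightarrow> real) \<Rightarrow> nat \<Rightarrow> nat \<Rightarrow> real" where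
  "mmul n A B = (\<lambda>i j. \<Sum>m<n. A i m * B m j)"

definition mtrans :: "(nat \<Rightarrow> nat \<Rightarrow> real) \<Rightarrow> nat \<Rightarrow> nat \<Rightarrow> real" where
  "mtrans A = (\<lambda>i j. A j i)"

definition KYdelta :: "nat \<Rightarrow> nat \<Rightarrow> (nat \<Rightarrow> nat \<Rightarrow> real) \<Rightarrow> (nat \<Rightarrow> nat \<Rightarrow> real) \<Rightarrow>
    (nat \<Rightarrow> real \<Rightarrow> real) \<Rightarrow> (nat \<Rightarrow> real^'n \<Rightarrow> real) \<Rightarrow>
    ((real \<Rightarrow> real^'n \<Rightarrow> real) \<Rightarrow> real) \<Rightarrow> real \<Rightarrow> real^'n \<Rightarrow> real" where
  "KYdelta M Nx Oinv Kx \<xi> \<psi> ell = (\<lambda>t x.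
     \<Sum>j<M. \<Sum>l<Nx. \<Sum>j'<M. \<Sum>l'<Nx.
        kron Oinv Kx (j, l) (j', l') * ell (tens (\<xi> j') (\<psi> l')) * tens (\<xi> j) (\<psi> l) t x)"

definition Sdelta :: "(real^'n) set \<Rightarrow> real^'n^'n \<Rightarrow> real \<Rightarrow> nat \<Rightarrow> nat \<Rightarrow>
    (nat \<Rightarrow> nat \<Rightarrow> real) \<Rightarrow> (nat \<Rightarrow> nat \<Rightarrow> real) \<Rightarrow>
    (nat \<Rightarrow> real \<Rightarrow> real) \<Rightarrow> (nat \<Rightarrow> real^'n \<Rightarrow> real) \<Rightarrow>
    (real \<Rightarrow> real^'n \<Rightarrow> real) \<Rightarrow> (real \<Rightarrow> real^'n \<Rightarrow> real) \<Rightarrow> real" where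
  "Sdelta \<Omega> D c M Nx Oinv Kx \<xi> \<psi> u w =
     Bform \<Omega> D c w (KYdelta M Nx Oinv Kx \<xi> \<psi> (\<lambda>v. Bform \<Omega> D c u v)) + l2O \<Omega> (u 0) (w 0)"

end

theory Submission
  imports Defs
begin


lemma small_nat: "(0::real) < x \<Longrightarrow> \<exists>m::nat. 1 / (real m + 1) < x"
proof -
  assume "0 < x"
  then obtain n where n: "n > 0" "inverse (real n) < x" using ex_inverse_of_nat_less by blast
  have "1 / (real n + 1) \<le> inverse (real n)" using n(1) by (simp add: field_simps)
  thus ?thesis using n by (intro exI[of _ n]) linarith
qed

definition cauchy_cond :: "(real \<Rightarrow> bool) \<Rightarrow> (real \<Rightarrow> real) \<Rightarrow> bool" where
  "cauchy_cond P g \<longleftrightarrow> (\<forall>n::nat. \<exists>m::nat. \<forall>q q'::rat.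
     0 < abs (of_rat q :: real) \<and> abs (of_rat q :: real) < 1 / (real m + 1) \<and> 0 < abs (of_rat q' :: real) \<and> abs (of_rat q' :: real) < 1 / (real m + 1)
     \<and> P (of_rat q) \<and> P (of_rat q') \<longrightarrow>
     \<bar>(g (of_rat q) - g 0) / of_rat q - (g (of_rat q') - g 0) / of_rat q'\<bar> \<le> 1 / (real n + 1))"

lemma cauchy_cond_1:
  fixes g :: "real \<Rightarrow> real"
  assumes "(g has_real_derivative D) (at 0)"
  shows "cauchy_cond P g"
  unfolding cauchy_cond_def
proof
  fix n :: nat
  define Q where "Q = (\<lambda>s. (g s - g 0) / s)"
  have lim: "Q \<midarrow>0\<rightarrow> D" using assms unfolding DERIV_def Q_def by simp
  have "(0::real) < 1 / (2 * (real n + 1))" by simp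
  then obtain s where s: "s > 0" "\<And>x. x \<noteq> 0 \<and> norm (x - 0) < s \<Longrightarrow> norm (Q x - D) < 1 / (2 * (real n + 1))"
    using lim unfolding LIM_eq by meson
  obtain m where m: "1 / (real m + 1) < s" using small_nat[OF s(1)] by blast
  show "\<exists>m::nat. \<forall>q q'::rat.
     0 < abs (of_rat q :: real) \<and> abs (of_rat q :: real) < 1 / (real m + 1) \<and> 0 < abs (of_rat q' :: real) \<and> abs (of_rat q' :: real) < 1 / (real m + 1)
     \<and> P (of_rat q) \<and> P (of_rat q') \<longrightarrow>
     \<bar>(g (of_rat q) - g 0) / of_rat q - (g (of_rat q') - g 0) / of_rat q'\<bar> \<le> 1 / (real n + 1)"
  proof (intro exI[of _ m] allI impI)
    fix q q' :: rat
    assume h: "0 < abs (of_rat q :: real) \<and> abs (of_rat q :: real) < 1 / (real m + 1) \<and> 0 < abs (of_rat q' :: real) \<and> abs (of_rat q' :: real) < 1 / (real m + 1)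
     \<and> P (of_rat q) \<and> P (of_rat q')"
    have a: "\<bar>Q (of_rat q) - D\<bar> < 1 / (2 * (real n + 1))" using s(2)[of "of_rat q"] h m by auto
    have b: "\<bar>Q (of_rat q') - D\<bar> < 1 / (2 * (real n + 1))" using s(2)[of "of_rat q'"] h m by auto
    have "\<bar>Q (of_rat q) - Q (of_rat q')\<bar> < 1 / (2 * (real n + 1)) + 1 / (2 * (real n + 1))"
      using a b by linarith
    also have "\<dots> = 1 / (real n + 1)" by (simp add: field_simps)
    finally show "\<bar>(g (of_rat q) - g 0) / of_rat q - (g (of_rat q') - g 0) / of_rat q'\<bar> \<le> 1 / (real n + 1)"
      unfolding Q_def by simp
  qed
qed

lemma cauchy_cond_2:
  fixes g :: "real \<Rightarrow> real"
  assumes cc: "cauchy_cond P g" and rho: "\<rho> > 0" and P: "\<And>s. \<bar>s\<bar> < \<rho> \<Longrightarrow> P s"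
    and cont: "\<And>s. 0 < \<bar>s\<bar> \<Longrightarrow> \<bar>s\<bar> < \<rho> \<Longrightarrow> isCont g s"
  shows "\<exists>D. (g has_real_derivative D) (at 0)"
proof -
  define Q where "Q = (\<lambda>s. (g s - g 0) / s)"
  define X where "X = (\<lambda>k::nat. Q (1 / (real k + 1)))"
  obtain M0 where M0: "1 / (real M0 + 1) < \<rho>" using small_nat[OF rho] by blast
  have Xk: "1 / (real k + 1) < \<rho>" if "k \<ge> M0" for k
  proof -
    have "1 / (real k + 1) \<le> 1 / (real M0 + 1)" using that by (simp add: frac_le)
    thus ?thesis using M0 by linarith
  qed
  have ccQ: "\<exists>m::nat. \<forall>q q'::rat.
     0 < abs (of_rat q :: real) \<and> abs (of_rat q :: real) < 1 / (real m + 1) \<and> 0 < abs (of_rat q' :: real) \<and> abs (of_rat q' :: real) < 1 / (real m + 1)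
     \<and> P (of_rat q) \<and> P (of_rat q') \<longrightarrow> \<bar>Q (of_rat q) - Q (of_rat q')\<bar> \<le> 1 / (real n + 1)" for n
    using cc unfolding cauchy_cond_def Q_def by blast
  have ratk: "of_rat (1 / (of_nat k + 1)) = 1 / (real k + 1)" for k
    by (simp add: of_rat_divide of_rat_add)
  have "Cauchy X"
  proof (rule metric_CauchyI)
    fix e :: real assume e: "e > 0"
    obtain n where n: "1 / (real n + 1) < e" using small_nat[OF e] by blast
    obtain m where m: "\<forall>q q'::rat.
     0 < abs (of_rat q :: real) \<and> abs (of_rat q :: real) < 1 / (real m + 1) \<and> 0 < abs (of_rat q' :: real) \<and> abs (of_rat q' :: real) < 1 / (real m + 1)
     \<and> P (of_rat q) \<and> P (of_rat q') \<longrightarrow> \<bar>Q (of_rat q) - Q (of_rat q')\<bar> \<le> 1 / (real n + 1)"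
      using ccQ by blast
    show "\<exists>M. \<forall>k\<ge>M. \<forall>k'\<ge>M. dist (X k) (X k') < e"
    proof (intro exI[of _ "max (Suc m) M0"] allI impI)
      fix k k' assume kk: "k \<ge> max (Suc m) M0" "k' \<ge> max (Suc m) M0"
      have sm: "1 / (real j + 1) < 1 / (real m + 1)" if "j \<ge> Suc m" for j
        using that by (simp add: frac_less2)
      have "\<bar>Q (of_rat (1 / (of_nat k + 1))) - Q (of_rat (1 / (of_nat k' + 1)))\<bar> \<le> 1 / (real n + 1)"
        using m[rule_format, of "1 / (of_nat k + 1)" "1 / (of_nat k' + 1)"] kk sm[of k] sm[of k']
          P[OF order.strict_trans1[OF _ Xk[of k]]] P[OF order.strict_trans1[OF _ Xk[of k']]]
        unfolding ratk by auto
      thus "dist (X k) (X k') < e" unfolding X_def dist_real_def ratk using n by linarith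
    qed
  qed
  then obtain L where L: "X \<longlonglongrightarrow> L" using convergent_def Cauchy_convergent_iff by blast
  have "Q \<midarrow>0\<rightarrow> L"
    unfolding LIM_eq
  proof (intro allI impI)
    fix r :: real assume r: "r > 0"
    obtain n where n: "1 / (real n + 1) < r / 3" using small_nat[of "r/3"] r by auto
    define e where "e = 1 / (real n + 1)"
    have e: "e > 0" unfolding e_def by simp
    obtain m where m: "\<forall>q q'::rat.
     0 < abs (of_rat q :: real) \<and> abs (of_rat q :: real) < 1 / (real m + 1) \<and> 0 < abs (of_rat q' :: real) \<and> abs (of_rat q' :: real) < 1 / (real m + 1)
     \<and> P (of_rat q) \<and> P (of_rat q') \<longrightarrow> \<bar>Q (of_rat q) - Q (of_rat q')\<bar> \<le> e"
      using ccQ unfolding e_def by blast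
    define \<delta> where "\<delta> = min (1 / (real m + 1)) \<rho>"
    have dpos: "\<delta> > 0" unfolding \<delta>_def using rho by simp
    show "\<exists>s>0. \<forall>x. x \<noteq> 0 \<and> norm (x - 0) < s \<longrightarrow> norm (Q x - L) < r"
    proof (intro exI[of _ \<delta>] conjI allI impI dpos)
      fix s :: real assume s: "s \<noteq> 0 \<and> norm (s - 0) < \<delta>"
      have "isCont Q s" unfolding Q_def using cont[of s] s \<delta>_def
        by (auto intro!: continuous_intros)
      then obtain \<eta> where eta: "\<eta> > 0" "\<And>y. y \<noteq> s \<and> norm (y - s) < \<eta> \<Longrightarrow> norm (Q y - Q s) < e"
        unfolding isCont_def LIM_eq using e by meson
      define \<eta>' where "\<eta>' = min \<eta> (min (\<delta> - \<bar>s\<bar>) \<bar>s\<bar>)"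
      have "\<eta>' > 0" unfolding \<eta>'_def using eta s by auto
      then obtain r0 where r0: "r0 \<in> \<rat>" "s < r0" "r0 < s + \<eta>'" using Rats_dense_in_real[of s "s + \<eta>'"] by auto
      obtain q where q: "r0 = of_rat q" using r0(1) Rats_cases by blast
      have "0 < abs r0 \<and> abs r0 < \<delta>"
      proof (cases "s < 0")
        case True
        have "\<eta>' \<le> \<bar>s\<bar>" "\<eta>' \<le> \<delta> - \<bar>s\<bar>" unfolding \<eta>'_def by auto
        then show ?thesis using r0 True s by auto
      next
        case False
        have "\<eta>' \<le> \<delta> - \<bar>s\<bar>" unfolding \<eta>'_def by auto
        then show ?thesis using r0 False s by auto
      qed
      hence qs: "0 < abs (of_rat q :: real)" "abs (of_rat q :: real) < \<delta>" using q by auto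
      have Qq: "\<bar>Q (of_rat q) - Q s\<bar> < e" using eta(2)[of "of_rat q"] r0 q unfolding \<eta>'_def by auto
      obtain K where K: "\<forall>k\<ge>K. norm (X k - L) < e" using L e unfolding LIMSEQ_def dist_real_def by (auto simp: dist_real_def)
      define k where "k = max K (max (Suc m) M0)"
      have sm: "1 / (real k + 1) < 1 / (real m + 1)" unfolding k_def by (simp add: frac_less2)
      have "\<bar>Q (of_rat q) - Q (of_rat (1 / (of_nat k + 1)))\<bar> \<le> e"
        using m[rule_format, of q "1 / (of_nat k + 1)"] qs sm P[OF order.strict_trans1[OF _ Xk[of k]]]
          P[of "of_rat q"] unfolding ratk \<delta>_def k_def by auto
      hence "\<bar>Q (of_rat q) - X k\<bar> \<le> e" unfolding X_def ratk .
      moreover have "\<bar>X k - L\<bar> < e" using K k_def by auto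
      ultimately have "\<bar>Q s - L\<bar> < 3 * e" using Qq by linarith
      thus "norm (Q s - L) < r" using n unfolding e_def by simp
    qed
  qed
  thus ?thesis unfolding DERIV_def Q_def by auto
qed




lemma deriv_nonexist:
  assumes "\<not> (\<exists>D. (g has_real_derivative D) (at x))"
  shows "deriv g x = (SOME D::real. False)"
proof -
  have "(\<lambda>D. (g has_real_derivative D) (at x)) = (\<lambda>D. False)" using assms by auto
  thus ?thesis unfolding deriv_def by simp
qed

lemma seq_inv: "(\<lambda>n. 1 / (real n + 1)) \<longlonglongrightarrow> 0"
  using LIMSEQ_inverse_real_of_nat by (simp add: inverse_eq_divide add.commute)

lemma deriv_dir_measurable:
  fixes f :: "'a::euclidean_space \<Rightarrow> real"
  assumes U: "open U" and cf: "continuous_on U f"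
  shows "(\<lambda>x. indicator U x * deriv (\<lambda>s. f (x + s *\<^sub>R e)) 0) \<in> borel_measurable borel"
proof -
  define H where "H = (\<lambda>(q::rat) (q'::rat) x. indicator (U \<inter> ((\<lambda>y. y - of_rat q *\<^sub>R e) ` U) \<inter> ((\<lambda>y. y - of_rat q' *\<^sub>R e) ` U)) x *
      ((f (x + of_rat q *\<^sub>R e) - f x) / of_rat q - (f (x + of_rat q' *\<^sub>R e) - f x) / of_rat q'))"
  have opn: "open ((\<lambda>y. y - c *\<^sub>R e) ` U)" for c
    using open_translation[OF U, of "- (c *\<^sub>R e)"] by (simp add: image_def)
  have memt: "x \<in> (\<lambda>y. y - c *\<^sub>R e) ` U \<longleftrightarrow> x + c *\<^sub>R e \<in> U" for x c
    by (auto simp: image_def) (metis add_diff_cancel)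
  have contsh: "continuous_on V (\<lambda>x. f (x + c *\<^sub>R e))" if "\<And>x. x \<in> V \<Longrightarrow> x + c *\<^sub>R e \<in> U" for V c
    by (rule continuous_on_compose2[OF cf]) (auto intro!: continuous_intros that)
  have Hm[measurable]: "H q q' \<in> borel_measurable borel" for q q'
  proof -
    let ?V = "U \<inter> ((\<lambda>y. y - of_rat q *\<^sub>R e) ` U) \<inter> ((\<lambda>y. y - of_rat q' *\<^sub>R e) ` U)"
    have "?V \<in> sets borel" by (intro borel_open open_Int opn U)
    moreover have "continuous_on ?V (\<lambda>x. (f (x + of_rat q *\<^sub>R e) - f x) / of_rat q - (f (x + of_rat q' *\<^sub>R e) - f x) / of_rat q')"
      unfolding divide_inverse by (intro continuous_intros contsh continuous_on_subset[OF cf]) (auto simp: memt)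
    ultimately have "(\<lambda>x. indicator ?V x *\<^sub>R ((f (x + of_rat q *\<^sub>R e) - f x) / of_rat q - (f (x + of_rat q' *\<^sub>R e) - f x) / of_rat q')) \<in> borel_measurable borel"
      by (rule borel_measurable_continuous_on_indicator)
    thus ?thesis unfolding H_def by simp
  qed
  define E where "E = {x. x \<in> U \<and> (\<forall>n::nat. \<exists>m::nat. \<forall>q q'::rat.
     0 < abs (of_rat q :: real) \<and> abs (of_rat q :: real) < 1 / (real m + 1) \<and> 0 < abs (of_rat q' :: real) \<and> abs (of_rat q' :: real) < 1 / (real m + 1)
     \<and> x + of_rat q *\<^sub>R e \<in> U \<and> x + of_rat q' *\<^sub>R e \<in> U \<longrightarrow> abs (H q q' x) \<le> 1 / (real n + 1))}"
  have Ub[measurable]: "U \<in> sets borel" using U by (rule borel_open)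
  have [measurable]: "Measurable.pred borel (\<lambda>x. x + c *\<^sub>R e \<in> U)" for c
    by measurable
  have "Measurable.pred borel (\<lambda>x. x \<in> E)"
    unfolding E_def mem_Collect_eq by measurable
  hence Eb[measurable]: "E \<in> sets borel" by (simp add: pred_def)
  have E_iff: "x \<in> E \<longleftrightarrow> (\<exists>D. ((\<lambda>s. f (x + s *\<^sub>R e)) has_real_derivative D) (at 0))" if xU: "x \<in> U" for x
  proof -
    have "x \<in> E \<longleftrightarrow> cauchy_cond (\<lambda>s. x + s *\<^sub>R e \<in> U) (\<lambda>s. f (x + s *\<^sub>R e))"
      unfolding E_def cauchy_cond_def H_def using xU by (auto simp: memt)
    also have "\<dots> \<longleftrightarrow> (\<exists>D. ((\<lambda>s. f (x + s *\<^sub>R e)) has_real_derivative D) (at 0))"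
    proof
      assume cc: "cauchy_cond (\<lambda>s. x + s *\<^sub>R e \<in> U) (\<lambda>s. f (x + s *\<^sub>R e))"
      obtain r where r: "r > 0" "ball x r \<subseteq> U" using U xU open_contains_ball by blast
      define \<rho> where "\<rho> = r / (norm e + 1)"
      have np: "norm e + 1 > 0" using norm_ge_zero[of e] by linarith
      have rho: "\<rho> > 0" unfolding \<rho>_def using r np by simp
      have inU: "x + s *\<^sub>R e \<in> U" if "\<bar>s\<bar> < \<rho>" for s
      proof -
        have "norm (s *\<^sub>R e) = \<bar>s\<bar> * norm e" by simp
        also have "\<dots> \<le> \<bar>s\<bar> * (norm e + 1)" by (simp add: mult_left_mono)
        also have "\<dots> < \<rho> * (norm e + 1)" using that np by simp
        also have "\<dots> = r" unfolding \<rho>_def using np by simp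
        finally show ?thesis using r(2) by (auto simp: dist_norm)
      qed
      show "\<exists>D. ((\<lambda>s. f (x + s *\<^sub>R e)) has_real_derivative D) (at 0)"
      proof (rule cauchy_cond_2[OF cc rho inU])
        fix s :: real assume "0 < \<bar>s\<bar>" "\<bar>s\<bar> < \<rho>"
        hence c1: "isCont f (x + s *\<^sub>R e)" using inU cf U continuous_on_eq_continuous_at by blast
        have c2: "isCont (\<lambda>s. x + s *\<^sub>R e) s" by (intro continuous_intros)
        show "isCont (\<lambda>s. f (x + s *\<^sub>R e)) s"
          using isCont_o2[OF c2 c1] .
      qed
    qed (auto intro: cauchy_cond_1)
    finally show ?thesis .
  qed
  define c0 where "c0 = (SOME D::real. False)"
  define L where "L = (\<lambda>n::nat. \<lambda>x. indicator (U \<inter> ((\<lambda>y. y - (1 / (real n + 1)) *\<^sub>R e) ` U)) x *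
      ((f (x + (1 / (real n + 1)) *\<^sub>R e) - f x) / (1 / (real n + 1))))"
  have Lm[measurable]: "L n \<in> borel_measurable borel" for n
  proof -
    let ?V = "U \<inter> ((\<lambda>y. y - (1 / (real n + 1)) *\<^sub>R e) ` U)"
    have "?V \<in> sets borel" by (intro borel_open open_Int opn U)
    moreover have "continuous_on ?V (\<lambda>x. (f (x + (1 / (real n + 1)) *\<^sub>R e) - f x) / (1 / (real n + 1)))"
      unfolding divide_inverse by (intro continuous_intros contsh continuous_on_subset[OF cf]) (auto simp: memt)
    ultimately have "(\<lambda>x. indicator ?V x *\<^sub>R ((f (x + (1 / (real n + 1)) *\<^sub>R e) - f x) / (1 / (real n + 1)))) \<in> borel_measurable borel"
      by (rule borel_measurable_continuous_on_indicator)
    thus ?thesis unfolding L_def by simp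
  qed
  define G where "G = (\<lambda>n x. if x \<in> E then L n x else if x \<in> U then c0 else 0)"
  have Gm: "G n \<in> borel_measurable borel" for n
    unfolding G_def by measurable
  have conv: "(\<lambda>n. G n x) \<longlonglongrightarrow> indicator U x * deriv (\<lambda>s. f (x + s *\<^sub>R e)) 0" for x
  proof (cases "x \<in> U")
    case False
    then have "x \<notin> E" unfolding E_def by auto
    then show ?thesis using False unfolding G_def by simp
  next
    case xU: True
    show ?thesis
    proof (cases "x \<in> E")
      case False
      then have "deriv (\<lambda>s. f (x + s *\<^sub>R e)) 0 = c0"
        unfolding c0_def using E_iff[OF xU] by (intro deriv_nonexist) auto
      then show ?thesis using False xU unfolding G_def by simp
    next
      case True
      then obtain D where D: "((\<lambda>s. f (x + s *\<^sub>R e)) has_real_derivative D) (at 0)" using E_iff[OF xU] by blast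
      then have dv: "deriv (\<lambda>s. f (x + s *\<^sub>R e)) 0 = D" by (rule DERIV_imp_deriv)
      have lim: "(\<lambda>h. (f (x + h *\<^sub>R e) - f x) / h) \<midarrow>0\<rightarrow> D" using D unfolding DERIV_def by simp
      have l2: "(\<lambda>n. (f (x + (1 / (real n + 1)) *\<^sub>R e) - f x) / (1 / (real n + 1))) \<longlonglongrightarrow> D"
        by (rule tendsto_compose_eventually[OF lim seq_inv]) simp
      obtain r where r: "r > 0" "ball x r \<subseteq> U" using U xU open_contains_ball by blast
      have ev: "eventually (\<lambda>n. x + (1 / (real n + 1)) *\<^sub>R e \<in> U) sequentially"
      proof -
        have "((\<lambda>n. x + (1 / (real n + 1)) *\<^sub>R e) \<longlongrightarrow> x + 0 *\<^sub>R e) sequentially"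
          by (intro tendsto_intros seq_inv)
        hence "eventually (\<lambda>n. x + (1 / (real n + 1)) *\<^sub>R e \<in> ball x r) sequentially"
          using r(1) by (intro topological_tendstoD) auto
        thus ?thesis by eventually_elim (use r in auto)
      qed
      have "eventually (\<lambda>n. G n x = (f (x + (1 / (real n + 1)) *\<^sub>R e) - f x) / (1 / (real n + 1))) sequentially"
        using ev by eventually_elim (use True xU in \<open>auto simp: G_def L_def memt\<close>)
      then show ?thesis using l2 dv xU by (simp add: tendsto_cong)
    qed
  qed
  show ?thesis
    by (rule borel_measurable_LIMSEQ_real[OF conv Gm])
qed




lemma set_int_AE_eq:
  fixes f g :: "'a \<Rightarrow> real"
  assumes "(\<lambda>x. indicator A x * f x) \<in> borel_measurable M" "(\<lambda>x. indicator A x * g x) \<in> borel_measurable M"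
    and "AE x in M. x \<in> A \<longrightarrow> f x = g x"
  shows "(LINT x:A|M. f x) = (LINT x:A|M. g x)"
  unfolding set_lebesgue_integral_def
  using assms by (intro integral_cong_AE) (auto simp: indicator_def)

lemma set_int_lincomb:
  fixes F :: "nat \<Rightarrow> 'a \<Rightarrow> real"
  assumes "\<And>l. l < N \<Longrightarrow> set_integrable M A (F l)"
  shows "(LINT x:A|M. a * (\<Sum>l<N. b l * F l x)) = a * (\<Sum>l<N. b l * (LINT x:A|M. F l x))"
proof -
  have i: "integrable M (\<lambda>x. indicator A x * F l x)" if "l < N" for l
    using assms[OF that] unfolding set_integrable_def by simp
  have "(LINT x:A|M. a * (\<Sum>l<N. b l * F l x)) = integral\<^sup>L M (\<lambda>x. a * (\<Sum>l<N. b l * (indicator A x * F l x)))"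
    unfolding set_lebesgue_integral_def by (simp add: sum_distrib_left mult_ac)
  also have "\<dots> = a * (\<Sum>l<N. b l * integral\<^sup>L M (\<lambda>x. indicator A x * F l x))"
    by (simp add: integral_sum i)
  finally show ?thesis unfolding set_lebesgue_integral_def by simp
qed

lemma set_int_bdd:
  fixes h :: "'a::euclidean_space \<Rightarrow> real"
  assumes "A \<in> sets borel" "bounded A" "(\<lambda>x. indicator A x * h x) \<in> borel_measurable borel"
    and "AE x in lborel. x \<in> A \<longrightarrow> \<bar>h x\<bar> \<le> C"
  shows "set_integrable lborel A h"
  unfolding set_integrable_def
proof (rule Bochner_Integration.integrable_bound[where f="\<lambda>x. indicator A x * C"])
  show "integrable lborel (\<lambda>x. indicator A x * C)"
    using assms(1) emeasure_bounded_finite[OF assms(2)] by (intro integrable_mult_left) auto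
  show "(\<lambda>x. indicator A x *\<^sub>R h x) \<in> borel_measurable lborel" using assms(3) by simp
  show "AE x in lborel. norm (indicator A x *\<^sub>R h x) \<le> norm (indicator A x * C)"
    using assms(4) by eventually_elim (auto simp: indicator_def)
qed

lemma bound_bilin:
  fixes D :: "real^'d^'d"
  assumes "\<And>i. \<bar>u $ i\<bar> \<le> C1" "\<And>i. \<bar>v $ i\<bar> \<le> C2"
  shows "\<bar>(D *v u) \<bullet> v\<bar> \<le> (\<Sum>i\<in>UNIV. \<Sum>j\<in>UNIV. \<bar>D $ i $ j\<bar>) * C1 * C2"
proof -
  have C1: "C1 \<ge> 0" using assms(1)[of undefined] by linarith
  have C2: "C2 \<ge> 0" using assms(2)[of undefined] by linarith
  have "(D *v u) \<bullet> v = (\<Sum>i\<in>UNIV. \<Sum>j\<in>UNIV. D $ i $ j * u $ j * v $ i)"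
    by (simp add: inner_vec_def matrix_vector_mult_def sum_distrib_right)
  also have "\<bar>\<dots>\<bar> \<le> (\<Sum>i\<in>UNIV. \<Sum>j\<in>UNIV. \<bar>D $ i $ j * u $ j * v $ i\<bar>)"
    by (rule order.trans[OF sum_abs]) (intro sum_mono sum_abs)
  also have "\<dots> \<le> (\<Sum>i\<in>UNIV. \<Sum>j\<in>UNIV. \<bar>D $ i $ j\<bar> * C1 * C2)"
  proof (intro sum_mono)
    fix i j
    have "\<bar>u $ j\<bar> * \<bar>v $ i\<bar> \<le> C1 * C2" by (intro mult_mono assms C1) auto
    hence "\<bar>D $ i $ j\<bar> * (\<bar>u $ j\<bar> * \<bar>v $ i\<bar>) \<le> \<bar>D $ i $ j\<bar> * (C1 * C2)" by (intro mult_left_mono) auto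
    thus "\<bar>D $ i $ j * u $ j * v $ i\<bar> \<le> \<bar>D $ i $ j\<bar> * C1 * C2" by (simp add: abs_mult mult.assoc)
  qed
  also have "\<dots> = (\<Sum>i\<in>UNIV. \<Sum>j\<in>UNIV. \<bar>D $ i $ j\<bar>) * C1 * C2"
    by (simp add: sum_distrib_right)
  finally show ?thesis .
qed

lemma grad_comp: "grad f x $ i = deriv (\<lambda>s. f (x + s *\<^sub>R axis i 1)) 0"
  unfolding grad_def by simp

locale SP =
  fixes \<Omega> :: "(real^'d) set" and D :: "real^'d^'d" and c :: real and N :: nat
    and \<psi> :: "nat \<Rightarrow> real^'d \<Rightarrow> real"
  assumes Om: "open \<Omega>" "bounded \<Omega>"
    and cont: "\<And>l. l < N \<Longrightarrow> continuous_on \<Omega> (\<psi> l)"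
    and bnd: "\<And>l. l < N \<Longrightarrow> \<exists>C. \<forall>x\<in>\<Omega>. \<bar>\<psi> l x\<bar> \<le> C"
    and AEd: "AE x in lborel. x \<in> \<Omega> \<longrightarrow> (\<forall>l<N. \<forall>i. ((\<lambda>s. \<psi> l (x + s *\<^sub>R axis i 1)) has_real_derivative (grad (\<psi> l) x $ i)) (at 0))"
    and AEb: "\<And>l. l < N \<Longrightarrow> \<exists>C. AE x in lborel. x \<in> \<Omega> \<longrightarrow> (\<forall>i. \<bar>grad (\<psi> l) x $ i\<bar> \<le> C)"
begin

lemma Ob[measurable]: "\<Omega> \<in> sets borel" using Om(1) by (rule borel_open)

lemma grad_meas: fixes \<eta> :: "real^'d \<Rightarrow> real" shows "continuous_on \<Omega> \<eta> \<Longrightarrow> (\<lambda>x. indicator \<Omega> x * (grad \<eta> x $ i)) \<in> borel_measurable borel"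
  unfolding grad_comp by (rule deriv_dir_measurable[OF Om(1)])

lemma fun_meas: fixes \<eta> :: "real^'d \<Rightarrow> real" shows "continuous_on \<Omega> \<eta> \<Longrightarrow> (\<lambda>x. indicator \<Omega> x * \<eta> x) \<in> borel_measurable borel"
  using borel_measurable_continuous_on_indicator[OF Ob, of \<eta>] by simp

lemma integrand_meas:
  fixes \<eta> \<zeta> :: "real^'d \<Rightarrow> real"
  assumes "continuous_on \<Omega> \<eta>" "continuous_on \<Omega> \<zeta>"
  shows "(\<lambda>x. indicator \<Omega> x * ((D *v grad \<eta> x) \<bullet> grad \<zeta> x + c * \<eta> x * \<zeta> x)) \<in> borel_measurable borel"
proof -
  have eq: "indicator \<Omega> x * ((D *v grad \<eta> x) \<bullet> grad \<zeta> x + c * \<eta> x * \<zeta> x) =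
     (\<Sum>i\<in>UNIV. \<Sum>j\<in>UNIV. D $ i $ j * (indicator \<Omega> x * (grad \<eta> x $ j)) * (indicator \<Omega> x * (grad \<zeta> x $ i)))
     + c * (indicator \<Omega> x * \<eta> x) * (indicator \<Omega> x * \<zeta> x)" for x
    by (cases "x \<in> \<Omega>") (simp_all add: inner_vec_def matrix_vector_mult_def sum_distrib_right)
  note [measurable] = grad_meas[OF assms(1)] grad_meas[OF assms(2)] fun_meas[OF assms(1)] fun_meas[OF assms(2)]
  show ?thesis unfolding eq by measurable
qed

lemma prod_meas:
  fixes \<eta> \<zeta> :: "real^'d \<Rightarrow> real"
  assumes "continuous_on \<Omega> \<eta>" "continuous_on \<Omega> \<zeta>"
  shows "(\<lambda>x. indicator \<Omega> x * (\<eta> x * \<zeta> x)) \<in> borel_measurable borel"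
proof -
  have eq: "indicator \<Omega> x * (\<eta> x * \<zeta> x) = (indicator \<Omega> x * \<eta> x) * (indicator \<Omega> x * \<zeta> x)" for x
    by (cases "x \<in> \<Omega>") simp_all
  note [measurable] = fun_meas[OF assms(1)] fun_meas[OF assms(2)]
  show ?thesis unfolding eq by measurable
qed

lemma int_prod: "k < N \<Longrightarrow> l < N \<Longrightarrow> set_integrable lborel \<Omega> (\<lambda>x. \<psi> k x * \<psi> l x)"
proof -
  assume kl: "k < N" "l < N"
  obtain C1 where C1: "\<forall>x\<in>\<Omega>. \<bar>\<psi> k x\<bar> \<le> C1" using bnd kl by blast
  obtain C2 where C2: "\<forall>x\<in>\<Omega>. \<bar>\<psi> l x\<bar> \<le> C2" using bnd kl by blast
  show ?thesis
  proof (rule set_int_bdd[OF Ob Om(2) prod_meas[OF cont cont]])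
    show "AE x in lborel. x \<in> \<Omega> \<longrightarrow> \<bar>\<psi> k x * \<psi> l x\<bar> \<le> C1 * C2"
      using C1 C2 by (intro AE_I2 impI) (auto simp: abs_mult intro!: mult_mono)
  qed (use kl in auto)
qed

lemma int_integrand: "k < N \<Longrightarrow> l < N \<Longrightarrow>
   set_integrable lborel \<Omega> (\<lambda>x. (D *v grad (\<psi> k) x) \<bullet> grad (\<psi> l) x + c * \<psi> k x * \<psi> l x)"
proof -
  assume kl: "k < N" "l < N"
  obtain C1 where C1: "\<forall>x\<in>\<Omega>. \<bar>\<psi> k x\<bar> \<le> C1" using bnd kl by blast
  obtain C2 where C2: "\<forall>x\<in>\<Omega>. \<bar>\<psi> l x\<bar> \<le> C2" using bnd kl by blast
  obtain G1 where G1: "AE x in lborel. x \<in> \<Omega> \<longrightarrow> (\<forall>i. \<bar>grad (\<psi> k) x $ i\<bar> \<le> G1)" using AEb kl by blast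
  obtain G2 where G2: "AE x in lborel. x \<in> \<Omega> \<longrightarrow> (\<forall>i. \<bar>grad (\<psi> l) x $ i\<bar> \<le> G2)" using AEb kl by blast
  show ?thesis
  proof (rule set_int_bdd[OF Ob Om(2) integrand_meas[OF cont cont]])
    show "AE x in lborel. x \<in> \<Omega> \<longrightarrow> \<bar>(D *v grad (\<psi> k) x) \<bullet> grad (\<psi> l) x + c * \<psi> k x * \<psi> l x\<bar>
       \<le> (\<Sum>i\<in>UNIV. \<Sum>j\<in>UNIV. \<bar>D $ i $ j\<bar>) * G1 * G2 + \<bar>c\<bar> * C1 * C2"
      using G1 G2
    proof eventually_elim
      case (elim x)
      show ?case
      proof
        assume x: "x \<in> \<Omega>"
        have a: "\<bar>(D *v grad (\<psi> k) x) \<bullet> grad (\<psi> l) x\<bar> \<le> (\<Sum>i\<in>UNIV. \<Sum>j\<in>UNIV. \<bar>D $ i $ j\<bar>) * G1 * G2"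
          using elim x by (intro bound_bilin) auto
        have b: "\<bar>c * \<psi> k x * \<psi> l x\<bar> \<le> \<bar>c\<bar> * C1 * C2"
          using C1 C2 x unfolding abs_mult by (intro mult_mono) auto
        show "\<bar>(D *v grad (\<psi> k) x) \<bullet> grad (\<psi> l) x + c * \<psi> k x * \<psi> l x\<bar>
          \<le> (\<Sum>i\<in>UNIV. \<Sum>j\<in>UNIV. \<bar>D $ i $ j\<bar>) * G1 * G2 + \<bar>c\<bar> * C1 * C2"
          using a b by linarith
      qed
    qed
  qed (use kl in auto)
qed

lemma cont_lin: "continuous_on \<Omega> (\<lambda>x. \<Sum>l<N. b l * \<psi> l x)"
  by (intro continuous_intros cont) auto

lemma l2O_lin:
  assumes "k < N"
  shows "l2O \<Omega> (\<lambda>x. a * \<psi> k x) (\<lambda>x. \<Sum>l<N. b l * \<psi> l x) = a * (\<Sum>l<N. b l * l2O \<Omega> (\<psi> k) (\<psi> l))"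
proof -
  have "l2O \<Omega> (\<lambda>x. a * \<psi> k x) (\<lambda>x. \<Sum>l<N. b l * \<psi> l x) = (LINT x:\<Omega>|lborel. a * (\<Sum>l<N. b l * (\<psi> k x * \<psi> l x)))"
    unfolding l2O_def by (simp add: sum_distrib_left mult_ac)
  also have "\<dots> = a * (\<Sum>l<N. b l * l2O \<Omega> (\<psi> k) (\<psi> l))"
    unfolding l2O_def by (rule set_int_lincomb) (use int_prod assms in auto)
  finally show ?thesis .
qed

lemma aform_lin:
  assumes "k < N"
  shows "aform \<Omega> D c (\<lambda>x. a * \<psi> k x) (\<lambda>x. \<Sum>l<N. b l * \<psi> l x) = a * (\<Sum>l<N. b l * aform \<Omega> D c (\<psi> k) (\<psi> l))"
proof -
  have ck: "continuous_on \<Omega> (\<lambda>x. a * \<psi> k x)" by (intro continuous_intros cont assms)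
  have "aform \<Omega> D c (\<lambda>x. a * \<psi> k x) (\<lambda>x. \<Sum>l<N. b l * \<psi> l x) =
     (LINT x:\<Omega>|lborel. a * (\<Sum>l<N. b l * ((D *v grad (\<psi> k) x) \<bullet> grad (\<psi> l) x + c * \<psi> k x * \<psi> l x)))"
    unfolding aform_def
  proof (rule set_int_AE_eq)
    show "(\<lambda>x. indicator \<Omega> x * ((D *v grad (\<lambda>x. a * \<psi> k x) x) \<bullet> grad (\<lambda>x. \<Sum>l<N. b l * \<psi> l x) x + c * (a * \<psi> k x) * (\<Sum>l<N. b l * \<psi> l x))) \<in> borel_measurable lborel"
      using integrand_meas[OF ck cont_lin] by simp
    have eq: "indicator \<Omega> x * (a * (\<Sum>l<N. b l * ((D *v grad (\<psi> k) x) \<bullet> grad (\<psi> l) x + c * \<psi> k x * \<psi> l x)))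
       = a * (\<Sum>l<N. b l * (indicator \<Omega> x * ((D *v grad (\<psi> k) x) \<bullet> grad (\<psi> l) x + c * \<psi> k x * \<psi> l x)))" for x
      by (simp add: sum_distrib_left mult_ac)
    have [measurable]: "(\<lambda>x. indicator \<Omega> x * ((D *v grad (\<psi> k) x) \<bullet> grad (\<psi> l) x + c * \<psi> k x * \<psi> l x)) \<in> borel_measurable borel" if "l < N" for l
      using integrand_meas[OF cont cont] assms that by blast
    show "(\<lambda>x. indicator \<Omega> x * (a * (\<Sum>l<N. b l * ((D *v grad (\<psi> k) x) \<bullet> grad (\<psi> l) x + c * \<psi> k x * \<psi> l x)))) \<in> borel_measurable lborel"
      unfolding eq by measurable
    show "AE x in lborel. x \<in> \<Omega> \<longrightarrow> (D *v grad (\<lambda>x. a * \<psi> k x) x) \<bullet> grad (\<lambda>x. \<Sum>l<N. b l * \<psi> l x) x + c * (a * \<psi> k x) * (\<Sum>l<N. b l * \<psi> l x) =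
       a * (\<Sum>l<N. b l * ((D *v grad (\<psi> k) x) \<bullet> grad (\<psi> l) x + c * \<psi> k x * \<psi> l x))"
      using AEd
    proof eventually_elim
      case (elim x)
      show ?case
      proof
        assume x: "x \<in> \<Omega>"
        have g1: "grad (\<lambda>x. a * \<psi> k x) x = a *\<^sub>R grad (\<psi> k) x"
        proof -
          have "deriv (\<lambda>s. a * \<psi> k (x + s *\<^sub>R axis i 1)) 0 = a * (grad (\<psi> k) x $ i)" for i
            using elim x assms by (intro DERIV_imp_deriv DERIV_cmult) auto
          thus ?thesis unfolding vec_eq_iff by (simp add: grad_comp[of "\<lambda>x. a * \<psi> k x"])
        qed
        have g2: "grad (\<lambda>x. \<Sum>l<N. b l * \<psi> l x) x = (\<Sum>l<N. b l *\<^sub>R grad (\<psi> l) x)"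
        proof -
          have "deriv (\<lambda>s. \<Sum>l<N. b l * \<psi> l (x + s *\<^sub>R axis i 1)) 0 = (\<Sum>l<N. b l * (grad (\<psi> l) x $ i))" for i
            using elim x by (intro DERIV_imp_deriv DERIV_sum DERIV_cmult) auto
          thus ?thesis unfolding vec_eq_iff by (simp add: grad_comp[of "\<lambda>x. \<Sum>l<N. b l * \<psi> l x"] sum_component)
        qed
        show "(D *v grad (\<lambda>x. a * \<psi> k x) x) \<bullet> grad (\<lambda>x. \<Sum>l<N. b l * \<psi> l x) x + c * (a * \<psi> k x) * (\<Sum>l<N. b l * \<psi> l x) =
          a * (\<Sum>l<N. b l * ((D *v grad (\<psi> k) x) \<bullet> grad (\<psi> l) x + c * \<psi> k x * \<psi> l x))"
          unfolding g1 g2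
          by (simp add: inner_sum_right matrix_vector_mult_scaleR sum_distrib_left sum.distrib
              algebra_simps)
      qed
    qed
  qed
  also have "\<dots> = a * (\<Sum>l<N. b l * aform \<Omega> D c (\<psi> k) (\<psi> l))"
    unfolding aform_def by (rule set_int_lincomb) (use int_integrand assms in auto)
  finally show ?thesis .
qed

end



lemma set_integrable_sum':
  fixes f :: "'i \<Rightarrow> 'a \<Rightarrow> real"
  assumes "\<And>i. i \<in> S \<Longrightarrow> set_integrable M A (f i)"
  shows "set_integrable M A (\<lambda>x. \<Sum>i\<in>S. f i x)"
  using assms unfolding set_integrable_def by (simp add: sum_distrib_left integrable_sum)

lemma set_integral_sum':
  fixes f :: "'i \<Rightarrow> 'a \<Rightarrow> real"
  assumes "\<And>i. i \<in> S \<Longrightarrow> set_integrable M A (f i)"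
  shows "(LINT x:A|M. (\<Sum>i\<in>S. f i x)) = (\<Sum>i\<in>S. LINT x:A|M. f i x)"
  using assms unfolding set_integrable_def set_lebesgue_integral_def
  by (simp add: sum_distrib_left integral_sum)

lemma set_integrable_cmult: "set_integrable M A (f :: 'a \<Rightarrow> real) \<Longrightarrow> set_integrable M A (\<lambda>x. a * f x)"
  unfolding set_integrable_def by (simp add: mult.left_commute[of "indicator A _"])

lemma set_integral_cmult: "(LINT x:A|M. a * (f x :: real)) = a * (LINT x:A|M. f x)"
  by simp

lemma deriv_shift0: "deriv (\<lambda>s. f (t + s)) 0 = deriv f (t::real)"
proof -
  have "(\<lambda>D. ((\<lambda>s. f (t + s *\<^sub>R 1)) has_real_derivative D) (at 0)) = (\<lambda>D. (f has_real_derivative D) (at t))"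
    using DERIV_shift[of f _ 0 t] by (simp add: add.commute)
  thus ?thesis unfolding deriv_def by simp
qed

lemma sum_delta_nat: "j < (M::nat) \<Longrightarrow> (\<Sum>m<M. (if m = j then c else 0) * h m) = (c::real) * h j"
proof -
  assume j: "j < M"
  have "(\<Sum>m<M. (if m = j then c else 0) * h m) = (\<Sum>m<M. if m = j then c * h m else 0)"
    by (intro sum.cong) auto
  also have "\<dots> = c * h j" using j by (simp add: sum.delta)
  finally show ?thesis .
qed

definition good :: "nat \<Rightarrow> (nat \<Rightarrow> real \<Rightarrow> real) \<Rightarrow> (real \<Rightarrow> real) \<Rightarrow> (nat \<Rightarrow> real) \<Rightarrow> bool" where
  "good M \<xi> f a \<longleftrightarrow> (\<lambda>t. indicator {0<..<1::real} t * f t) \<in> borel_measurable borel \<and>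
     (AE t in lborel. t \<in> {0<..<1} \<longrightarrow> f t = (\<Sum>j<M. a j * \<xi> j t))"

locale TP =
  fixes Nt :: nat and \<phi> :: "nat \<Rightarrow> real \<Rightarrow> real" and B :: "real set"
    and Mt :: nat and \<xi> :: "nat \<Rightarrow> real \<Rightarrow> real" and Oinv :: "nat \<Rightarrow> nat \<Rightarrow> real"
  assumes finB: "finite B"
    and cont\<phi>: "\<And>i. i < Nt \<Longrightarrow> continuous_on {0<..<1} (\<phi> i)"
    and diff\<phi>: "\<And>i t. i < Nt \<Longrightarrow> t \<in> {0<..<1} \<Longrightarrow> t \<notin> B \<Longrightarrow> \<exists>D. (\<phi> i has_real_derivative D) (at t)"
    and xi_meas: "\<And>j. j < Mt \<Longrightarrow> set_borel_measurable lborel {0<..<1} (\<xi> j)"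
    and xi_sq: "\<And>j. j < Mt \<Longrightarrow> set_integrable lborel {0<..<1} (\<lambda>t. (\<xi> j t)\<^sup>2)"
    and xi_orth: "\<And>j j'. j < Mt \<Longrightarrow> j' < Mt \<Longrightarrow> j \<noteq> j' \<Longrightarrow> l2I (\<xi> j) (\<xi> j') = 0"
    and exp\<phi>: "\<And>i. i < Nt \<Longrightarrow> \<exists>a. AE t in lborel. t \<in> {0<..<1} \<longrightarrow> \<phi> i t = (\<Sum>j<Mt. a j * \<xi> j t)"
    and expd\<phi>: "\<And>i. i < Nt \<Longrightarrow> \<exists>a. AE t in lborel. t \<in> {0<..<1} \<longrightarrow> deriv (\<phi> i) t = (\<Sum>j<Mt. a j * \<xi> j t)"
    and Oinv: "\<And>j j'. j < Mt \<Longrightarrow> j' < Mt \<Longrightarrow> (\<Sum>m<Mt. Oinv j m * l2I (\<xi> j') (\<xi> m)) = (if j = j' then 1 else 0)"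
begin

lemma Ib[measurable]: "{0<..<1::real} \<in> sets borel" by simp

lemma xi_m: "j < Mt \<Longrightarrow> (\<lambda>t. indicator {0<..<1::real} t * \<xi> j t) \<in> borel_measurable borel"
  using xi_meas unfolding set_borel_measurable_def by simp

lemma xi_prod_int: "j < Mt \<Longrightarrow> j' < Mt \<Longrightarrow> set_integrable lborel {0<..<1} (\<lambda>t. \<xi> j t * \<xi> j' t)"
  unfolding set_integrable_def
proof (rule Bochner_Integration.integrable_bound[where f="\<lambda>t. indicator {0<..<1::real} t * ((\<xi> j t)\<^sup>2 + (\<xi> j' t)\<^sup>2)"])
  assume jj: "j < Mt" "j' < Mt"
  show "integrable lborel (\<lambda>t. indicator {0<..<1::real} t * ((\<xi> j t)\<^sup>2 + (\<xi> j' t)\<^sup>2))"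
    using xi_sq[OF jj(1)] xi_sq[OF jj(2)] unfolding set_integrable_def by (simp add: distrib_left)
  have eq: "indicator {0<..<1::real} t *\<^sub>R (\<xi> j t * \<xi> j' t) = (indicator {0<..<1::real} t * \<xi> j t) * (indicator {0<..<1::real} t * \<xi> j' t)" for t
    by (simp add: indicator_def)
  note [measurable] = xi_m[OF jj(1)] xi_m[OF jj(2)]
  show "(\<lambda>t. indicator {0<..<1::real} t *\<^sub>R (\<xi> j t * \<xi> j' t)) \<in> borel_measurable lborel"
    unfolding eq by measurable
  show "AE t in lborel. norm (indicator {0<..<1::real} t *\<^sub>R (\<xi> j t * \<xi> j' t)) \<le> norm (indicator {0<..<1::real} t * ((\<xi> j t)\<^sup>2 + (\<xi> j' t)\<^sup>2))"
  proof (intro AE_I2)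
    fix t
    have "\<bar>\<xi> j t * \<xi> j' t\<bar> \<le> (\<xi> j t)\<^sup>2 + (\<xi> j' t)\<^sup>2"
      using abs_le_square_iff sum_squares_bound[of "\<xi> j t" "\<xi> j' t"]
    proof -
      have "2 * \<xi> j t * \<xi> j' t \<le> (\<xi> j t)\<^sup>2 + (\<xi> j' t)\<^sup>2" "2 * (- \<xi> j t) * \<xi> j' t \<le> (- \<xi> j t)\<^sup>2 + (\<xi> j' t)\<^sup>2"
        using sum_squares_bound by blast+
      moreover have "0 \<le> (\<xi> j t)\<^sup>2" "0 \<le> (\<xi> j' t)\<^sup>2" by simp_all
      ultimately show ?thesis by (simp add: abs_if)
    qed
    thus "norm (indicator {0<..<1::real} t *\<^sub>R (\<xi> j t * \<xi> j' t)) \<le> norm (indicator {0<..<1::real} t * ((\<xi> j t)\<^sup>2 + (\<xi> j' t)\<^sup>2))"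
      by (auto simp: indicator_def)
  qed
qed

lemma d_def': "l2I f g = (LINT t:{0<..<1}|lborel. f t * g t)" unfolding l2I_def ..

lemma good_int:
  assumes f: "good Mt \<xi> f a" and g: "good Mt \<xi> g b"
  shows "set_integrable lborel {0<..<1} (\<lambda>t. f t * g t)"
    and "l2I f g = (\<Sum>j<Mt. a j * b j * l2I (\<xi> j) (\<xi> j))"
proof -
  let ?I = "{0<..<1::real}"
  define h where "h = (\<lambda>t. \<Sum>j<Mt. \<Sum>j'<Mt. a j * b j' * (\<xi> j t * \<xi> j' t))"
  have hint: "set_integrable lborel ?I h"
    unfolding h_def
    by (intro set_integrable_sum' set_integrable_cmult xi_prod_int) auto
  have fm[measurable]: "(\<lambda>t. indicator ?I t * f t) \<in> borel_measurable borel" using f unfolding good_def by blast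
  have gm[measurable]: "(\<lambda>t. indicator ?I t * g t) \<in> borel_measurable borel" using g unfolding good_def by blast
  have eqm: "indicator ?I t *\<^sub>R (f t * g t) = (indicator ?I t * f t) * (indicator ?I t * g t)" for t
    by (simp add: indicator_def)
  have m: "(\<lambda>t. indicator ?I t *\<^sub>R (f t * g t)) \<in> borel_measurable lborel" unfolding eqm by measurable
  have AEeq: "AE t in lborel. indicator ?I t *\<^sub>R h t = indicator ?I t *\<^sub>R (f t * g t)"
    using conjunct2[OF f[unfolded good_def]] conjunct2[OF g[unfolded good_def]]
  proof eventually_elim
    case (elim t)
    show ?case
    proof (cases "t \<in> ?I")
      case True
      then show ?thesis using elim unfolding h_def
        by (simp add: sum_product mult_ac)
    qed simp
  qed
  show si: "set_integrable lborel ?I (\<lambda>t. f t * g t)"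
    using hint unfolding set_integrable_def by (rule integrable_cong_AE_imp[OF _ m AEeq])
  have "l2I f g = (LINT t:?I|lborel. h t)"
  proof -
    have hm: "(\<lambda>t. indicator ?I t *\<^sub>R h t) \<in> borel_measurable lborel"
      using hint unfolding set_integrable_def by (rule borel_measurable_integrable)
    have AE2: "AE t in lborel. indicator ?I t *\<^sub>R (f t * g t) = indicator ?I t *\<^sub>R h t"
      using AEeq by (rule eventually_mono) (metis)
    show ?thesis unfolding l2I_def set_lebesgue_integral_def
      by (rule integral_cong_AE[OF m hm AE2])
  qed
  also have "\<dots> = (\<Sum>j<Mt. \<Sum>j'<Mt. a j * b j' * l2I (\<xi> j) (\<xi> j'))"
  proof -
    have "(LINT t:?I|lborel. h t) = (\<Sum>j<Mt. LINT t:?I|lborel. (\<Sum>j'<Mt. a j * b j' * (\<xi> j t * \<xi> j' t)))"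
      unfolding h_def by (rule set_integral_sum') (auto intro!: set_integrable_sum' set_integrable_cmult xi_prod_int)
    also have "\<dots> = (\<Sum>j<Mt. \<Sum>j'<Mt. LINT t:?I|lborel. a j * b j' * (\<xi> j t * \<xi> j' t))"
      by (intro sum.cong refl set_integral_sum') (auto intro!: set_integrable_cmult xi_prod_int)
    also have "\<dots> = (\<Sum>j<Mt. \<Sum>j'<Mt. a j * b j' * l2I (\<xi> j) (\<xi> j'))"
      unfolding l2I_def by (simp only: set_integral_cmult)
    finally show ?thesis .
  qed
  also have "\<dots> = (\<Sum>j<Mt. a j * b j * l2I (\<xi> j) (\<xi> j))"
  proof (intro sum.cong refl)
    fix j assume j: "j \<in> {..<Mt}"
    have "(\<Sum>j'<Mt. a j * b j' * l2I (\<xi> j) (\<xi> j')) = (\<Sum>j'\<in>{j}. a j * b j' * l2I (\<xi> j) (\<xi> j'))"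
      by (rule sum.mono_neutral_right) (use j xi_orth in auto)
    thus "(\<Sum>j'<Mt. a j * b j' * l2I (\<xi> j) (\<xi> j')) = a j * b j * l2I (\<xi> j) (\<xi> j)" by simp
  qed
  finally show "l2I f g = (\<Sum>j<Mt. a j * b j * l2I (\<xi> j) (\<xi> j))" .
qed

lemma good_xi: "j < Mt \<Longrightarrow> good Mt \<xi> (\<xi> j) (\<lambda>m. if m = j then 1 else 0)"
  unfolding good_def using xi_m by (simp add: sum_delta_nat)

lemma good_int_xi:
  assumes f: "good Mt \<xi> f a" and j: "j < Mt"
  shows "set_integrable lborel {0<..<1} (\<lambda>t. f t * \<xi> j t)"
    and "l2I f (\<xi> j) = a j * l2I (\<xi> j) (\<xi> j)"
proof -
  have "(\<Sum>m<Mt. a m * (if m = j then 1 else 0) * l2I (\<xi> m) (\<xi> m)) = (\<Sum>m<Mt. (if m = j then 1 else 0) * (a m * l2I (\<xi> m) (\<xi> m)))"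
    by (intro sum.cong) auto
  also have "\<dots> = a j * l2I (\<xi> j) (\<xi> j)" using sum_delta_nat[OF j] by simp
  finally show "set_integrable lborel {0<..<1} (\<lambda>t. f t * \<xi> j t)" "l2I f (\<xi> j) = a j * l2I (\<xi> j) (\<xi> j)"
    using good_int[OF f good_xi[OF j]] by auto
qed

lemma parseval:
  assumes f: "good Mt \<xi> f a" and g: "good Mt \<xi> g b"
  shows "(\<Sum>j<Mt. \<Sum>j'<Mt. l2I f (\<xi> j) * Oinv j j' * l2I g (\<xi> j')) = l2I f g"
proof -
  have O1: "Oinv j j' * l2I (\<xi> j') (\<xi> j') = (if j = j' then 1 else 0)" if "j < Mt" "j' < Mt" for j j'
  proof -
    have "(\<Sum>m<Mt. Oinv j m * l2I (\<xi> j') (\<xi> m)) = (\<Sum>m\<in>{j'}. Oinv j m * l2I (\<xi> j') (\<xi> m))"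
      by (rule sum.mono_neutral_right) (use that xi_orth in auto)
    thus ?thesis using Oinv[OF that] by simp
  qed
  have "(\<Sum>j<Mt. \<Sum>j'<Mt. l2I f (\<xi> j) * Oinv j j' * l2I g (\<xi> j')) =
        (\<Sum>j<Mt. \<Sum>j'<Mt. a j * l2I (\<xi> j) (\<xi> j) * b j' * (Oinv j j' * l2I (\<xi> j') (\<xi> j')))"
    by (intro sum.cong refl) (simp add: good_int_xi(2)[OF f] good_int_xi(2)[OF g] mult_ac)
  also have "\<dots> = (\<Sum>j<Mt. \<Sum>j'<Mt. a j * l2I (\<xi> j) (\<xi> j) * b j' * (if j = j' then 1 else 0))"
    by (intro sum.cong refl) (simp add: O1)
  also have "\<dots> = (\<Sum>j<Mt. a j * b j * l2I (\<xi> j) (\<xi> j))"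
  proof (intro sum.cong refl)
    fix j assume "j \<in> {..<Mt}"
    hence "(\<Sum>j'<Mt. (if j' = j then 1 else 0) * (a j * l2I (\<xi> j) (\<xi> j) * b j')) = 1 * (a j * l2I (\<xi> j) (\<xi> j) * b j)"
      using sum_delta_nat[of j Mt 1 "\<lambda>j'. a j * l2I (\<xi> j) (\<xi> j) * b j'"] by simp
    thus "(\<Sum>j'<Mt. a j * l2I (\<xi> j) (\<xi> j) * b j' * (if j = j' then 1 else 0)) = a j * b j * l2I (\<xi> j) (\<xi> j)"
      by (simp add: mult_ac eq_commute[of j] cong: if_cong)
  qed
  also have "\<dots> = l2I f g" using good_int(2)[OF f g] by simp
  finally show ?thesis .
qed

lemma phi_meas: "i < Nt \<Longrightarrow> (\<lambda>t. indicator {0<..<1::real} t * \<phi> i t) \<in> borel_measurable borel"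
  using borel_measurable_continuous_on_indicator[OF Ib cont\<phi>, of i] by simp

lemma dphi_meas: "i < Nt \<Longrightarrow> (\<lambda>t. indicator {0<..<1::real} t * deriv (\<phi> i) t) \<in> borel_measurable borel"
  using deriv_dir_measurable[OF open_greaterThanLessThan cont\<phi>, of i 1] by (simp add: deriv_shift0)

lemma good_phi: "i < Nt \<Longrightarrow> \<exists>a. good Mt \<xi> (\<phi> i) a"
  using exp\<phi> phi_meas unfolding good_def by blast

lemma good_dphi: "i < Nt \<Longrightarrow> \<exists>a. good Mt \<xi> (deriv (\<phi> i)) a"
  using expd\<phi> dphi_meas unfolding good_def by blast

end



lemma AE_not_in_finite: "finite B \<Longrightarrow> AE t in lborel. (t::real) \<notin> B"
  using finite_imp_null_set_lborel AE_not_in by blast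

locale BF = SP \<Omega> D c N \<psi> + TP Nt \<phi> B Mt \<xi> Oinv
  for \<Omega> :: "(real^'d) set" and D c N \<psi> Nt \<phi> B Mt \<xi> Oinv
begin

lemma Bform_core:
  assumes i: "i < Nt" and k: "k < N"
  shows "Bform \<Omega> D c (tens (\<phi> i) (\<psi> k)) (\<lambda>t x. \<Sum>j<Mt. \<Sum>l<N. \<gamma> j l * (\<xi> j t * \<psi> l x)) =
    (\<Sum>j<Mt. \<Sum>l<N. \<gamma> j l * (l2I (deriv (\<phi> i)) (\<xi> j) * l2O \<Omega> (\<psi> k) (\<psi> l) + l2I (\<phi> i) (\<xi> j) * aform \<Omega> D c (\<psi> k) (\<psi> l)))"
proof -
  let ?I = "{0<..<1::real}"
  let ?v = "\<lambda>t x. \<Sum>j<Mt. \<Sum>l<N. \<gamma> j l * (\<xi> j t * \<psi> l x)"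
  let ?w = "tens (\<phi> i) (\<psi> k)"
  define F where "F = (\<lambda>t. l2O \<Omega> (\<lambda>x. deriv (\<lambda>s. ?w s x) t) (?v t) + aform \<Omega> D c (?w t) (?v t))"
  define G where "G = (\<lambda>t. \<Sum>j<Mt. \<Sum>l<N. \<gamma> j l * (l2O \<Omega> (\<psi> k) (\<psi> l) * (deriv (\<phi> i) t * \<xi> j t) + aform \<Omega> D c (\<psi> k) (\<psi> l) * (\<phi> i t * \<xi> j t)))"
  have FG: "F t = G t" if t: "t \<in> ?I" "t \<notin> B" for t
  proof -
    obtain Dv where Dv: "(\<phi> i has_real_derivative Dv) (at t)" using diff\<phi>[OF i t] by blast
    have dd: "deriv (\<lambda>s. ?w s x) t = deriv (\<phi> i) t * \<psi> k x" for x
    proof -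
      have "((\<lambda>s. \<phi> i s * \<psi> k x) has_real_derivative Dv * \<psi> k x) (at t)"
        by (rule DERIV_cmult_right[OF Dv])
      thus ?thesis unfolding tens_def using DERIV_imp_deriv[OF Dv] DERIV_imp_deriv by auto
    qed
    define b where "b = (\<lambda>l. \<Sum>j<Mt. \<gamma> j l * \<xi> j t)"
    have vt: "?v t = (\<lambda>x. \<Sum>l<N. b l * \<psi> l x)"
    proof (rule ext)
      fix x
      have "(\<Sum>j<Mt. \<Sum>l<N. \<gamma> j l * (\<xi> j t * \<psi> l x)) = (\<Sum>l<N. \<Sum>j<Mt. \<gamma> j l * (\<xi> j t * \<psi> l x))"
        by (rule sum.swap)
      also have "\<dots> = (\<Sum>l<N. b l * \<psi> l x)" unfolding b_def by (simp add: sum_distrib_right sum_distrib_left mult_ac)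
      finally show "(\<Sum>j<Mt. \<Sum>l<N. \<gamma> j l * (\<xi> j t * \<psi> l x)) = (\<Sum>l<N. b l * \<psi> l x)" .
    qed
    have wt: "?w t = (\<lambda>x. \<phi> i t * \<psi> k x)" unfolding tens_def by simp
    have "F t = deriv (\<phi> i) t * (\<Sum>l<N. b l * l2O \<Omega> (\<psi> k) (\<psi> l)) + \<phi> i t * (\<Sum>l<N. b l * aform \<Omega> D c (\<psi> k) (\<psi> l))"
      unfolding F_def dd vt wt l2O_lin[OF k] aform_lin[OF k] ..
    also have "\<dots> = G t"
    proof -
      have "deriv (\<phi> i) t * (\<Sum>l<N. b l * l2O \<Omega> (\<psi> k) (\<psi> l)) + \<phi> i t * (\<Sum>l<N. b l * aform \<Omega> D c (\<psi> k) (\<psi> l))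
         = (\<Sum>l<N. \<Sum>j<Mt. \<gamma> j l * (l2O \<Omega> (\<psi> k) (\<psi> l) * (deriv (\<phi> i) t * \<xi> j t) + aform \<Omega> D c (\<psi> k) (\<psi> l) * (\<phi> i t * \<xi> j t)))"
        unfolding b_def by (simp add: sum_distrib_left sum_distrib_right sum.distrib[symmetric] algebra_simps)
      also have "\<dots> = G t" unfolding G_def by (rule sum.swap)
      finally show ?thesis .
    qed
    finally show ?thesis .
  qed
  obtain a where a: "good Mt \<xi> (\<phi> i) a" using good_phi[OF i] by blast
  obtain a' where a': "good Mt \<xi> (deriv (\<phi> i)) a'" using good_dphi[OF i] by blast
  have Gm: "(\<lambda>t. indicator ?I t * G t) \<in> borel_measurable borel"
  proof -
    have eq: "indicator ?I t * G t = (\<Sum>j<Mt. \<Sum>l<N. \<gamma> j l * (l2O \<Omega> (\<psi> k) (\<psi> l) * ((indicator ?I t * deriv (\<phi> i) t) * (indicator ?I t * \<xi> j t))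
       + aform \<Omega> D c (\<psi> k) (\<psi> l) * ((indicator ?I t * \<phi> i t) * (indicator ?I t * \<xi> j t))))" for t
      unfolding G_def by (cases "t \<in> ?I") simp_all
    have [measurable]: "(\<lambda>t. indicator ?I t * \<xi> j t) \<in> borel_measurable borel" if "j < Mt" for j
      using xi_m that by blast
    note [measurable] = phi_meas[OF i] dphi_meas[OF i]
    show ?thesis unfolding eq by measurable
  qed
  have Fm: "(\<lambda>t. indicator ?I t * F t) \<in> borel_measurable borel"
  proof (rule measurable_discrete_difference[OF Gm])
    show "countable B" using finB by (rule countable_finite)
  qed (auto simp: FG indicator_def)
  have "Bform \<Omega> D c ?w ?v = (LINT t:?I|lborel. G t)"
    unfolding Bform_def F_def[symmetric]
  proof (rule set_int_AE_eq)
    show "(\<lambda>t. indicator ?I t * F t) \<in> borel_measurable lborel" using Fm by simp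
    show "(\<lambda>t. indicator ?I t * G t) \<in> borel_measurable lborel" using Gm by simp
    show "AE t in lborel. t \<in> ?I \<longrightarrow> F t = G t"
      using AE_not_in_finite[OF finB] by eventually_elim (auto simp: FG)
  qed
  also have "\<dots> = (\<Sum>j<Mt. \<Sum>l<N. \<gamma> j l * (l2O \<Omega> (\<psi> k) (\<psi> l) * l2I (deriv (\<phi> i)) (\<xi> j) + aform \<Omega> D c (\<psi> k) (\<psi> l) * l2I (\<phi> i) (\<xi> j)))"
  proof -
    have i1: "set_integrable lborel ?I (\<lambda>t. deriv (\<phi> i) t * \<xi> j t)" if "j < Mt" for j
      using good_int_xi(1)[OF a' that] .
    have i2: "set_integrable lborel ?I (\<lambda>t. \<phi> i t * \<xi> j t)" if "j < Mt" for j
      using good_int_xi(1)[OF a that] .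
    have i3: "set_integrable lborel ?I (\<lambda>t. \<gamma> j l * (l2O \<Omega> (\<psi> k) (\<psi> l) * (deriv (\<phi> i) t * \<xi> j t) + aform \<Omega> D c (\<psi> k) (\<psi> l) * (\<phi> i t * \<xi> j t)))" if "j < Mt" for j l
      using i1[OF that] i2[OF that] by (intro set_integrable_cmult set_integral_add(1))
    have "(LINT t:?I|lborel. G t) = (\<Sum>j<Mt. LINT t:?I|lborel. (\<Sum>l<N. \<gamma> j l * (l2O \<Omega> (\<psi> k) (\<psi> l) * (deriv (\<phi> i) t * \<xi> j t) + aform \<Omega> D c (\<psi> k) (\<psi> l) * (\<phi> i t * \<xi> j t))))"
      unfolding G_def by (rule set_integral_sum') (auto intro!: set_integrable_sum' i3)
    also have "\<dots> = (\<Sum>j<Mt. \<Sum>l<N. LINT t:?I|lborel. \<gamma> j l * (l2O \<Omega> (\<psi> k) (\<psi> l) * (deriv (\<phi> i) t * \<xi> j t) + aform \<Omega> D c (\<psi> k) (\<psi> l) * (\<phi> i t * \<xi> j t)))"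
      by (intro sum.cong refl set_integral_sum') (auto intro!: i3)
    also have "\<dots> = (\<Sum>j<Mt. \<Sum>l<N. \<gamma> j l * (l2O \<Omega> (\<psi> k) (\<psi> l) * l2I (deriv (\<phi> i)) (\<xi> j) + aform \<Omega> D c (\<psi> k) (\<psi> l) * l2I (\<phi> i) (\<xi> j)))"
    proof (intro sum.cong refl)
      fix j l assume j: "j \<in> {..<Mt}"
      show "(LINT t:?I|lborel. \<gamma> j l * (l2O \<Omega> (\<psi> k) (\<psi> l) * (deriv (\<phi> i) t * \<xi> j t) + aform \<Omega> D c (\<psi> k) (\<psi> l) * (\<phi> i t * \<xi> j t)))
        = \<gamma> j l * (l2O \<Omega> (\<psi> k) (\<psi> l) * l2I (deriv (\<phi> i)) (\<xi> j) + aform \<Omega> D c (\<psi> k) (\<psi> l) * l2I (\<phi> i) (\<xi> j))"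
        unfolding l2I_def set_integral_cmult
        using i1 i2 j by (subst set_integral_add(2)) (auto intro: set_integrable_cmult)
    qed
    finally show ?thesis .
  qed
  finally show ?thesis by (simp add: mult_ac)
qed

end



lemma tens_app: "tens f g t x = f t * g x" unfolding tens_def ..

lemma prod4:
  fixes a b :: "nat \<Rightarrow> nat \<Rightarrow> real"
  shows "(\<Sum>j<M. \<Sum>j'<M. a j j') * (\<Sum>l<N. \<Sum>l'<N. b l l') = (\<Sum>j<M. \<Sum>l<N. \<Sum>j'<M. \<Sum>l'<N. a j j' * b l l')"
proof -
  have "(\<Sum>j<M. \<Sum>j'<M. a j j') * (\<Sum>l<N. \<Sum>l'<N. b l l') = (\<Sum>j<M. \<Sum>j'<M. \<Sum>l<N. \<Sum>l'<N. a j j' * b l l')"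
    by (simp only: sum_distrib_right) (simp only: sum_distrib_left)
  also have "\<dots> = (\<Sum>j<M. \<Sum>l<N. \<Sum>j'<M. \<Sum>l'<N. a j j' * b l l')"
    by (intro sum.cong refl sum.swap)
  finally show ?thesis .
qed

lemma alg:
  fixes Om K :: "nat \<Rightarrow> nat \<Rightarrow> real" and P Q P' Q' Mm A Mm' A' :: "nat \<Rightarrow> real"
  shows "(\<Sum>j<M. \<Sum>l<N. (\<Sum>j'<M. \<Sum>l'<N. Om j j' * K l l' * (P' j' * Mm' l' + Q' j' * A' l')) * (P j * Mm l + Q j * A l))
  = (\<Sum>j<M. \<Sum>j'<M. P j * Om j j' * P' j') * (\<Sum>l<N. \<Sum>l'<N. Mm l * K l l' * Mm' l')
  + (\<Sum>j<M. \<Sum>j'<M. Q j * Om j j' * Q' j') * (\<Sum>l<N. \<Sum>l'<N. A l * K l l' * A' l')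
  + (\<Sum>j<M. \<Sum>j'<M. P j * Om j j' * Q' j') * (\<Sum>l<N. \<Sum>l'<N. Mm l * K l l' * A' l')
  + (\<Sum>j<M. \<Sum>j'<M. Q j * Om j j' * P' j') * (\<Sum>l<N. \<Sum>l'<N. A l * K l l' * Mm' l')"
proof -
  have L: "(\<Sum>j<M. \<Sum>l<N. (\<Sum>j'<M. \<Sum>l'<N. Om j j' * K l l' * (P' j' * Mm' l' + Q' j' * A' l')) * (P j * Mm l + Q j * A l))
    = (\<Sum>j<M. \<Sum>l<N. \<Sum>j'<M. \<Sum>l'<N. Om j j' * K l l' * (P' j' * Mm' l' + Q' j' * A' l') * (P j * Mm l + Q j * A l))"
    by (simp only: sum_distrib_right)
  have R: "(\<Sum>j<M. \<Sum>j'<M. P j * Om j j' * P' j') * (\<Sum>l<N. \<Sum>l'<N. Mm l * K l l' * Mm' l')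
  + (\<Sum>j<M. \<Sum>j'<M. Q j * Om j j' * Q' j') * (\<Sum>l<N. \<Sum>l'<N. A l * K l l' * A' l')
  + (\<Sum>j<M. \<Sum>j'<M. P j * Om j j' * Q' j') * (\<Sum>l<N. \<Sum>l'<N. Mm l * K l l' * A' l')
  + (\<Sum>j<M. \<Sum>j'<M. Q j * Om j j' * P' j') * (\<Sum>l<N. \<Sum>l'<N. A l * K l l' * Mm' l')
  = (\<Sum>j<M. \<Sum>l<N. \<Sum>j'<M. \<Sum>l'<N. (P j * Om j j' * P' j') * (Mm l * K l l' * Mm' l')
     + (Q j * Om j j' * Q' j') * (A l * K l l' * A' l') + (P j * Om j j' * Q' j') * (Mm l * K l l' * A' l')
     + (Q j * Om j j' * P' j') * (A l * K l l' * Mm' l'))"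
    unfolding prod4 by (simp only: sum.distrib)
  show ?thesis unfolding L R by (intro sum.cong refl) (simp add: algebra_simps)
qed

lemma mmul_form:
  assumes "\<And>l. l < N \<Longrightarrow> X k l = F l" "\<And>l'. l' < N \<Longrightarrow> Y l' k' = G l'"
  shows "(\<Sum>l<N. \<Sum>l'<N. F l * K l l' * G l') = mmul N (mmul N X K) Y k k'"
proof -
  have "mmul N (mmul N X K) Y k k' = (\<Sum>l'<N. \<Sum>l<N. X k l * K l l' * Y l' k')"
    unfolding mmul_def by (simp add: sum_distrib_right)
  also have "\<dots> = (\<Sum>l<N. \<Sum>l'<N. X k l * K l l' * Y l' k')" by (rule sum.swap)
  also have "\<dots> = (\<Sum>l<N. \<Sum>l'<N. F l * K l l' * G l')" by (intro sum.cong refl) (simp add: assms)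
  finally show ?thesis ..
qed

lemma l2I_comm: "l2I f g = l2I g f" unfolding l2I_def by (simp add: mult.commute)
lemma l2O_comm: "l2O \<Omega> f g = l2O \<Omega> g f" unfolding l2O_def by (simp add: mult.commute)

lemma aform_comm:
  fixes D :: "real^'d^'d"
  assumes "transpose D = D"
  shows "aform \<Omega> D c f g = aform \<Omega> D c g f"
proof -
  have "(D *v u) \<bullet> v = (D *v v) \<bullet> u" for u v :: "real^'d"
  proof -
    have "(D *v u) \<bullet> v = v \<bullet> (D *v u)" by (simp add: inner_commute)
    also have "\<dots> = (v v* D) \<bullet> u" by (simp add: dot_lmul_matrix)
    also have "v v* D = D *v v" using vector_transpose_matrix[of v D] assms by simp
    finally show ?thesis .
  qed
  thus ?thesis unfolding aform_def by (simp add: mult_ac)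
qed

lemma double_delta:
  assumes "j0 < (M::nat)" "l0 < (N::nat)"
  shows "(\<Sum>j<M. \<Sum>l<N. (if j = j0 \<and> l = l0 then 1 else 0) * X j l) = (X j0 l0 :: real)"
proof -
  have "(\<Sum>j<M. \<Sum>l<N. (if j = j0 \<and> l = l0 then 1 else 0) * X j l) = (\<Sum>j<M. if j = j0 then X j l0 else 0)"
  proof (intro sum.cong refl)
    fix j assume "j \<in> {..<M}"
    show "(\<Sum>l<N. (if j = j0 \<and> l = l0 then 1 else 0) * X j l) = (if j = j0 then X j l0 else 0)"
    proof (cases "j = j0")
      case True
      then show ?thesis using sum_delta_nat[OF assms(2), of 1 "X j"] by simp
    qed simp
  qed
  also have "\<dots> = X j0 l0" using assms by simp
  finally show ?thesis .
qed

context BF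
begin

lemma Bform_single:
  assumes i: "i < Nt" and k: "k < N" and j0: "j0 < Mt" and l0: "l0 < N"
  shows "Bform \<Omega> D c (tens (\<phi> i) (\<psi> k)) (tens (\<xi> j0) (\<psi> l0)) =
    l2I (deriv (\<phi> i)) (\<xi> j0) * l2O \<Omega> (\<psi> k) (\<psi> l0) + l2I (\<phi> i) (\<xi> j0) * aform \<Omega> D c (\<psi> k) (\<psi> l0)"
proof -
  have eq: "tens (\<xi> j0) (\<psi> l0) = (\<lambda>t x. \<Sum>j<Mt. \<Sum>l<N. (if j = j0 \<and> l = l0 then 1 else 0) * (\<xi> j t * \<psi> l x))"
    unfolding tens_def using double_delta[OF j0 l0] by simp
  show ?thesis unfolding eq Bform_core[OF i k]
    by (rule double_delta[OF j0 l0, where X="\<lambda>j l. l2I (deriv (\<phi> i)) (\<xi> j) * l2O \<Omega> (\<psi> k) (\<psi> l) + l2I (\<phi> i) (\<xi> j) * aform \<Omega> D c (\<psi> k) (\<psi> l)"])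
qed

lemma S_formula:
  assumes i: "i < Nt" and k: "k < N" and i': "i' < Nt" and k': "k' < N" and Dsym: "transpose D = D"
  shows "Sdelta \<Omega> D c Mt N Oinv Kx \<xi> \<psi> (tens (\<phi> i') (\<psi> k')) (tens (\<phi> i) (\<psi> k)) =
      kron (\<lambda>i j. l2I (deriv (\<phi> j)) (deriv (\<phi> i))) (mmul N (mmul N (\<lambda>k l. l2O \<Omega> (\<psi> l) (\<psi> k)) Kx) (\<lambda>k l. l2O \<Omega> (\<psi> l) (\<psi> k))) (i, k) (i', k')
    + kron (\<lambda>i j. l2I (\<phi> j) (\<phi> i)) (mmul N (mmul N (\<lambda>k l. aform \<Omega> D c (\<psi> l) (\<psi> k)) Kx) (\<lambda>k l. aform \<Omega> D c (\<psi> l) (\<psi> k))) (i, k) (i', k')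
    + kron (mtrans (\<lambda>i j. l2I (deriv (\<phi> j)) (\<phi> i))) (mmul N (mmul N (\<lambda>k l. l2O \<Omega> (\<psi> l) (\<psi> k)) Kx) (\<lambda>k l. aform \<Omega> D c (\<psi> l) (\<psi> k))) (i, k) (i', k')
    + kron (\<lambda>i j. l2I (deriv (\<phi> j)) (\<phi> i)) (mmul N (mmul N (\<lambda>k l. aform \<Omega> D c (\<psi> l) (\<psi> k)) Kx) (\<lambda>k l. l2O \<Omega> (\<psi> l) (\<psi> k))) (i, k) (i', k')
    + kron (\<lambda>i j. \<phi> i 0 * \<phi> j 0) (\<lambda>k l. l2O \<Omega> (\<psi> l) (\<psi> k)) (i, k) (i', k')"
proof -
  let ?P = "\<lambda>i j. l2I (deriv (\<phi> i)) (\<xi> j)"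
  let ?Q = "\<lambda>i j. l2I (\<phi> i) (\<xi> j)"
  let ?M = "\<lambda>k l. l2O \<Omega> (\<psi> k) (\<psi> l)"
  let ?A = "\<lambda>k l. aform \<Omega> D c (\<psi> k) (\<psi> l)"
  define \<gamma> where "\<gamma> = (\<lambda>j l. \<Sum>j'<Mt. \<Sum>l'<N. Oinv j j' * Kx l l' * (?P i' j' * ?M k' l' + ?Q i' j' * ?A k' l'))"
  have KY: "KYdelta Mt N Oinv Kx \<xi> \<psi> (Bform \<Omega> D c (tens (\<phi> i') (\<psi> k'))) = (\<lambda>t x. \<Sum>j<Mt. \<Sum>l<N. \<gamma> j l * (\<xi> j t * \<psi> l x))"
  proof (intro ext)
    fix t x
    show "KYdelta Mt N Oinv Kx \<xi> \<psi> (Bform \<Omega> D c (tens (\<phi> i') (\<psi> k'))) t x = (\<Sum>j<Mt. \<Sum>l<N. \<gamma> j l * (\<xi> j t * \<psi> l x))"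
      unfolding KYdelta_def
    proof (intro sum.cong refl)
      fix j l assume j: "j \<in> {..<Mt}" and l: "l \<in> {..<N}"
      have "(\<Sum>j'<Mt. \<Sum>l'<N. kron Oinv Kx (j, l) (j', l') * Bform \<Omega> D c (tens (\<phi> i') (\<psi> k')) (tens (\<xi> j') (\<psi> l')) * tens (\<xi> j) (\<psi> l) t x)
         = (\<Sum>j'<Mt. \<Sum>l'<N. Oinv j j' * Kx l l' * (?P i' j' * ?M k' l' + ?Q i' j' * ?A k' l') * (\<xi> j t * \<psi> l x))"
        by (intro sum.cong refl) (simp add: kron_def Bform_single[OF i' k'] tens_app)
      also have "\<dots> = \<gamma> j l * (\<xi> j t * \<psi> l x)"
        unfolding \<gamma>_def by (simp only: sum_distrib_right)
      finally show "(\<Sum>j'<Mt. \<Sum>l'<N. kron Oinv Kx (j, l) (j', l') * Bform \<Omega> D c (tens (\<phi> i') (\<psi> k')) (tens (\<xi> j') (\<psi> l')) * tens (\<xi> j) (\<psi> l) t x)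
         = \<gamma> j l * (\<xi> j t * \<psi> l x)" .
    qed
  qed
  obtain da where da: "good Mt \<xi> (deriv (\<phi> i)) da" using good_dphi[OF i] by blast
  obtain db where db: "good Mt \<xi> (deriv (\<phi> i')) db" using good_dphi[OF i'] by blast
  obtain pa where pa: "good Mt \<xi> (\<phi> i) pa" using good_phi[OF i] by blast
  obtain pb where pb: "good Mt \<xi> (\<phi> i') pb" using good_phi[OF i'] by blast
  have l0: "l2O \<Omega> (tens (\<phi> i') (\<psi> k') 0) (tens (\<phi> i) (\<psi> k) 0) = \<phi> i 0 * \<phi> i' 0 * l2O \<Omega> (\<psi> k') (\<psi> k)"
  proof -
    have "(\<lambda>x. tens (\<phi> i') (\<psi> k') 0 x * tens (\<phi> i) (\<psi> k) 0 x) = (\<lambda>x. (\<phi> i 0 * \<phi> i' 0) * (\<psi> k' x * \<psi> k x))"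
      by (auto simp: tens_app mult_ac)
    thus ?thesis unfolding l2O_def by simp
  qed
  have "Sdelta \<Omega> D c Mt N Oinv Kx \<xi> \<psi> (tens (\<phi> i') (\<psi> k')) (tens (\<phi> i) (\<psi> k)) =
     (\<Sum>j<Mt. \<Sum>l<N. \<gamma> j l * (?P i j * ?M k l + ?Q i j * ?A k l)) + \<phi> i 0 * \<phi> i' 0 * l2O \<Omega> (\<psi> k') (\<psi> k)"
    unfolding Sdelta_def KY Bform_core[OF i k] l0 ..
  also have "(\<Sum>j<Mt. \<Sum>l<N. \<gamma> j l * (?P i j * ?M k l + ?Q i j * ?A k l)) =
     (\<Sum>j<Mt. \<Sum>j'<Mt. ?P i j * Oinv j j' * ?P i' j') * (\<Sum>l<N. \<Sum>l'<N. ?M k l * Kx l l' * ?M k' l')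
   + (\<Sum>j<Mt. \<Sum>j'<Mt. ?Q i j * Oinv j j' * ?Q i' j') * (\<Sum>l<N. \<Sum>l'<N. ?A k l * Kx l l' * ?A k' l')
   + (\<Sum>j<Mt. \<Sum>j'<Mt. ?P i j * Oinv j j' * ?Q i' j') * (\<Sum>l<N. \<Sum>l'<N. ?M k l * Kx l l' * ?A k' l')
   + (\<Sum>j<Mt. \<Sum>j'<Mt. ?Q i j * Oinv j j' * ?P i' j') * (\<Sum>l<N. \<Sum>l'<N. ?A k l * Kx l l' * ?M k' l')"
    unfolding \<gamma>_def by (rule alg)
  also have "(\<Sum>j<Mt. \<Sum>j'<Mt. ?P i j * Oinv j j' * ?P i' j') = l2I (deriv (\<phi> i')) (deriv (\<phi> i))"
    using parseval[OF da db] l2I_comm[of "deriv (\<phi> i)" "deriv (\<phi> i')"] by simp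
  also have "(\<Sum>j<Mt. \<Sum>j'<Mt. ?Q i j * Oinv j j' * ?Q i' j') = l2I (\<phi> i') (\<phi> i)"
    using parseval[OF pa pb] l2I_comm[of "\<phi> i" "\<phi> i'"] by simp
  also have "(\<Sum>j<Mt. \<Sum>j'<Mt. ?P i j * Oinv j j' * ?Q i' j') = l2I (deriv (\<phi> i)) (\<phi> i')"
    using parseval[OF da pb] by simp
  also have "(\<Sum>j<Mt. \<Sum>j'<Mt. ?Q i j * Oinv j j' * ?P i' j') = l2I (deriv (\<phi> i')) (\<phi> i)"
    using parseval[OF pa db] l2I_comm[of "\<phi> i" "deriv (\<phi> i')"] by simp
  also have "(\<Sum>l<N. \<Sum>l'<N. ?M k l * Kx l l' * ?M k' l') = mmul N (mmul N (\<lambda>k l. l2O \<Omega> (\<psi> l) (\<psi> k)) Kx) (\<lambda>k l. l2O \<Omega> (\<psi> l) (\<psi> k)) k k'"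
    by (rule mmul_form) (auto simp: l2O_comm)
  also have "(\<Sum>l<N. \<Sum>l'<N. ?A k l * Kx l l' * ?A k' l') = mmul N (mmul N (\<lambda>k l. aform \<Omega> D c (\<psi> l) (\<psi> k)) Kx) (\<lambda>k l. aform \<Omega> D c (\<psi> l) (\<psi> k)) k k'"
    by (rule mmul_form) (auto simp: aform_comm[OF Dsym])
  also have "(\<Sum>l<N. \<Sum>l'<N. ?M k l * Kx l l' * ?A k' l') = mmul N (mmul N (\<lambda>k l. l2O \<Omega> (\<psi> l) (\<psi> k)) Kx) (\<lambda>k l. aform \<Omega> D c (\<psi> l) (\<psi> k)) k k'"
    by (rule mmul_form) (auto simp: l2O_comm)
  also have "(\<Sum>l<N. \<Sum>l'<N. ?A k l * Kx l l' * ?M k' l') = mmul N (mmul N (\<lambda>k l. aform \<Omega> D c (\<psi> l) (\<psi> k)) Kx) (\<lambda>k l. l2O \<Omega> (\<psi> l) (\<psi> k)) k k'"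
    by (rule mmul_form) (auto simp: aform_comm[OF Dsym])
  finally show ?thesis
    unfolding kron_def mtrans_def by simp
qed

end



lemma mpoly_dir_deriv:
  fixes q :: "real^'n \<Rightarrow> real"
  assumes "mpoly_fun p q"
  shows "\<exists>Qd. continuous_on UNIV Qd \<and> (\<forall>x. ((\<lambda>s. q (x + s *\<^sub>R e)) has_real_derivative Qd x) (at 0))"
proof -
  obtain a where a: "\<And>x. q x = (\<Sum>\<alpha>\<in>{\<alpha>. sum \<alpha> UNIV \<le> p}. a \<alpha> * (\<Prod>i\<in>UNIV. (x $ i) ^ \<alpha> i))"
    using assms unfolding mpoly_fun_def by blast
  define A where "A = {\<alpha>::'n\<Rightarrow>nat. sum \<alpha> UNIV \<le> p}"
  define Qd where "Qd = (\<lambda>x::real^'n. \<Sum>\<alpha>\<in>A. a \<alpha> * (\<Sum>i\<in>UNIV. (of_nat (\<alpha> i) * (x $ i) ^ (\<alpha> i - 1) * e $ i) * (\<Prod>j\<in>UNIV - {i}. (x $ j) ^ \<alpha> j)))"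
  have "continuous_on UNIV Qd" unfolding Qd_def by (intro continuous_intros)
  moreover have "((\<lambda>s. q (x + s *\<^sub>R e)) has_real_derivative Qd x) (at 0)" for x
  proof -
    have eq: "(\<lambda>s. q (x + s *\<^sub>R e)) = (\<lambda>s. \<Sum>\<alpha>\<in>A. a \<alpha> * (\<Prod>i\<in>UNIV. (x $ i + s * e $ i) ^ \<alpha> i))"
      unfolding a A_def by simp
    have d: "((\<lambda>s. (x $ i + s * e $ i) ^ \<alpha> i) has_real_derivative (of_nat (\<alpha> i) * (x $ i) ^ (\<alpha> i - 1) * e $ i)) (at 0)" for \<alpha> i
      by (auto intro!: derivative_eq_intros)
    have p: "((\<lambda>s. \<Prod>i\<in>UNIV. (x $ i + s * e $ i) ^ \<alpha> i) has_real_derivative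
       (\<Sum>i\<in>UNIV. (of_nat (\<alpha> i) * (x $ i) ^ (\<alpha> i - 1) * e $ i) * (\<Prod>j\<in>UNIV - {i}. (x $ j) ^ \<alpha> j))) (at 0)" for \<alpha>
    proof -
      have "((\<lambda>s. \<Prod>i\<in>UNIV. (x $ i + s * e $ i) ^ \<alpha> i) has_real_derivative
       (\<Sum>i\<in>UNIV. (of_nat (\<alpha> i) * (x $ i) ^ (\<alpha> i - 1) * e $ i) * (\<Prod>j\<in>UNIV - {i}. (x $ j + 0 * e $ j) ^ \<alpha> j))) (at 0)"
        by (rule has_field_derivative_prod) (rule d)
      thus ?thesis by simp
    qed
    show ?thesis unfolding eq Qd_def
      by (intro DERIV_sum DERIV_cmult p)
  qed
  ultimately show ?thesis by blast
qed




lemma finite_bound: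
  fixes f :: "'k \<Rightarrow> 'a \<Rightarrow> real"
  assumes "finite A" "\<And>a. a \<in> A \<Longrightarrow> \<exists>C. \<forall>x\<in>S a. \<bar>f a x\<bar> \<le> C"
  shows "\<exists>C. \<forall>a\<in>A. \<forall>x\<in>S a. \<bar>f a x\<bar> \<le> C"
  using assms
proof (induction A rule: finite_induct)
  case empty then show ?case by simp
next
  case (insert b A)
  obtain C1 where C1: "\<forall>a\<in>A. \<forall>x\<in>S a. \<bar>f a x\<bar> \<le> C1" using insert by blast
  obtain C2 where C2: "\<forall>x\<in>S b. \<bar>f b x\<bar> \<le> C2" using insert by blast
  show ?case
    by (rule exI[of _ "max C1 C2"]) (use C1 C2 in fastforce)
qed

lemma bounded_cont_fun:
  fixes f :: "'a::metric_space \<Rightarrow> real"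
  assumes "compact K" "continuous_on K f"
  shows "\<exists>C. \<forall>x\<in>K. \<bar>f x\<bar> \<le> C"
proof -
  have "bounded (f ` K)" using compact_continuous_image[OF assms(2,1)] compact_imp_bounded by blast
  thus ?thesis unfolding bounded_real by blast
qed

lemma local_deriv:
  fixes \<psi> :: "real^'d \<Rightarrow> real"
  assumes "mpoly_fun p q" "\<forall>y\<in>interior K. \<psi> y = q y"
  shows "\<exists>Qd. continuous_on UNIV Qd \<and> (\<forall>y\<in>interior K. ((\<lambda>s. \<psi> (y + s *\<^sub>R e)) has_real_derivative Qd y) (at 0))"
proof -
  obtain Qd where Qd: "continuous_on UNIV Qd" "\<And>x. ((\<lambda>s. q (x + s *\<^sub>R e)) has_real_derivative Qd x) (at 0)"
    using mpoly_dir_deriv[OF assms(1), of e] by blast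
  have "((\<lambda>s. \<psi> (y + s *\<^sub>R e)) has_real_derivative Qd y) (at 0)" if y: "y \<in> interior K" for y
  proof (rule has_field_derivative_transform_within_open[OF Qd(2)])
    show "open ((\<lambda>s. y + s *\<^sub>R e) -` interior K)"
      by (rule continuous_open_vimage) (auto intro!: continuous_intros)
    show "0 \<in> (\<lambda>s. y + s *\<^sub>R e) -` interior K" using y by simp
    show "q (y + s *\<^sub>R e) = \<psi> (y + s *\<^sub>R e)" if "s \<in> (\<lambda>s. y + s *\<^sub>R e) -` interior K" for s
      using that assms(2) by simp
  qed
  thus ?thesis using Qd(1) by blast
qed

lemma SP_inst:
  fixes \<Omega> :: "(real^'d) set" and T :: "(real^'d) set set" and D :: "real^'d^'d" and c :: real
  assumes bd: "bounded \<Omega>" and lip: "lipschitz_domain \<Omega>" and tri: "conforming_triangulation \<Omega> T"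
    and X: "\<forall>l<N. \<psi> l \<in> Xx_space \<Omega> T px"
  shows "SP \<Omega> N \<psi>"
proof -
  have op: "open \<Omega>" using lip unfolding lipschitz_domain_def by blast
  have finT: "finite T" and simp: "\<And>K. K \<in> T \<Longrightarrow> int CARD('d) simplex K" and cov: "\<Union>T = closure \<Omega>"
    using tri unfolding conforming_triangulation_def by auto
  have cK: "compact K" if "K \<in> T" for K using compact_simplex[OF simp[OF that]] .
  have cvK: "convex K" if "K \<in> T" for K using convex_simplex[OF simp[OF that]] .
  have contc: "continuous_on (closure \<Omega>) (\<psi> l)" if "l < N" for l
    using X that unfolding Xx_space_def by blast
  have pw: "pw_poly_T px T (\<psi> l)" if "l < N" for l
    using X that unfolding Xx_space_def by blast
  have cont: "continuous_on \<Omega> (\<psi> l)" if "l < N" for l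
    using contc[OF that] closure_subset continuous_on_subset by blast
  have bnd: "\<exists>C. \<forall>x\<in>\<Omega>. \<bar>\<psi> l x\<bar> \<le> C" if l: "l < N" for l
  proof -
    obtain C where "\<forall>x\<in>closure \<Omega>. \<bar>\<psi> l x\<bar> \<le> C"
      using bounded_cont_fun[OF _ contc[OF l]] bd compact_closure by blast
    thus ?thesis using closure_subset by blast
  qed
  have ld: "\<exists>Qd. continuous_on UNIV Qd \<and> (\<forall>y\<in>interior K. ((\<lambda>s. \<psi> l (y + s *\<^sub>R axis i 1)) has_real_derivative Qd y) (at 0))"
    if lK: "l < N" "K \<in> T" for l K i
  proof -
    obtain q where "mpoly_fun px q" "\<forall>y\<in>interior K. \<psi> l y = q y"
      using pw[OF lK(1)] lK(2) unfolding pw_poly_T_def by blast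
    thus ?thesis by (rule local_deriv)
  qed
  have nullK: "AE x in lborel. x \<notin> frontier K" if K: "K \<in> T" for K
  proof -
    have "negligible (frontier K)" using negligible_convex_frontier[OF cvK[OF K]] .
    hence "frontier K \<in> null_sets lborel"
      by (auto simp: null_sets_completion_iff negligible_iff_null_sets)
    thus ?thesis by (rule AE_not_in)
  qed
  have AEfr: "AE x in lborel. \<forall>K\<in>T. x \<notin> frontier K"
    using nullK finT by (simp add: AE_finite_all)
  have inint: "\<exists>K\<in>T. x \<in> interior K" if xx: "x \<in> \<Omega>" "\<forall>K\<in>T. x \<notin> frontier K" for x
  proof -
    obtain K where K: "K \<in> T" "x \<in> K" using cov xx(1) closure_subset by blast
    have "closure K = K" using cK[OF K(1)] compact_imp_closed closure_closed by blast
    thus ?thesis using K xx(2) unfolding frontier_def by blast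
  qed
  show ?thesis
  proof
    show "open \<Omega>" by (rule op)
    show "bounded \<Omega>" by (rule bd)
    show "continuous_on \<Omega> (\<psi> l)" if "l < N" for l using cont[OF that] .
    show "\<exists>C. \<forall>x\<in>\<Omega>. \<bar>\<psi> l x\<bar> \<le> C" if "l < N" for l using bnd[OF that] .
    show "AE x in lborel. x \<in> \<Omega> \<longrightarrow> (\<forall>l<N. \<forall>i. ((\<lambda>s. \<psi> l (x + s *\<^sub>R axis i 1)) has_real_derivative (grad (\<psi> l) x $ i)) (at 0))"
      using AEfr
    proof eventually_elim
      case (elim x)
      show ?case
      proof (intro impI allI)
        fix l i assume x: "x \<in> \<Omega>" and l: "l < N"
        obtain K where K: "K \<in> T" "x \<in> interior K" using inint[OF x elim] by blast
        obtain Qd where "((\<lambda>s. \<psi> l (x + s *\<^sub>R axis i 1)) has_real_derivative Qd x) (at 0)"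
          using ld[OF l K(1), of i] K(2) by blast
        thus "((\<lambda>s. \<psi> l (x + s *\<^sub>R axis i 1)) has_real_derivative (grad (\<psi> l) x $ i)) (at 0)"
          unfolding grad_comp using DERIV_imp_deriv by metis
      qed
    qed
    show "\<exists>C. AE x in lborel. x \<in> \<Omega> \<longrightarrow> (\<forall>i. \<bar>grad (\<psi> l) x $ i\<bar> \<le> C)" if l: "l < N" for l
    proof -
      have "\<exists>C. \<forall>a\<in>T \<times> UNIV. \<forall>x\<in>interior (fst a). \<bar>grad (\<psi> l) x $ snd a\<bar> \<le> C"
      proof (rule finite_bound)
        show "finite (T \<times> (UNIV :: 'd set))" using finT by simp
        fix a assume a: "a \<in> T \<times> (UNIV :: 'd set)"
        obtain Qd where Qd: "continuous_on UNIV Qd" "\<forall>y\<in>interior (fst a). ((\<lambda>s. \<psi> l (y + s *\<^sub>R axis (snd a) 1)) has_real_derivative Qd y) (at 0)"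
          using ld[OF l, of "fst a" "snd a"] a by auto
        obtain C where C: "\<forall>y\<in>fst a. \<bar>Qd y\<bar> \<le> C"
          using bounded_cont_fun[OF cK continuous_on_subset[OF Qd(1)], of "fst a"] a by auto
        have "\<forall>y\<in>interior (fst a). \<bar>grad (\<psi> l) y $ snd a\<bar> \<le> C"
        proof
          fix y assume y: "y \<in> interior (fst a)"
          have "grad (\<psi> l) y $ snd a = Qd y" unfolding grad_comp using Qd(2) y DERIV_imp_deriv by blast
          thus "\<bar>grad (\<psi> l) y $ snd a\<bar> \<le> C" using C y interior_subset by fastforce
        qed
        thus "\<exists>C. \<forall>x\<in>interior (fst a). \<bar>grad (\<psi> l) x $ snd a\<bar> \<le> C" by blast
      qed
      then obtain C where C: "\<forall>K\<in>T. \<forall>i. \<forall>x\<in>interior K. \<bar>grad (\<psi> l) x $ i\<bar> \<le> C" by fastforce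
      show ?thesis
        by (rule exI[of _ C]) (use AEfr in \<open>eventually_elim, use C inint in blast\<close>)
    qed
  qed
qed




lemma part_locate:
  fixes ts :: "real list"
  assumes "interval_partition ts" "0 < t" "t < 1" "t \<notin> set ts"
  shows "\<exists>m. Suc m < length ts \<and> ts ! m < t \<and> t < ts ! Suc m"
proof -
  have len: "length ts \<ge> 2" and sw: "sorted_wrt (<) ts" and hd: "hd ts = 0" and la: "last ts = 1"
    using assms(1) unfolding interval_partition_def by auto
  have ne: "ts \<noteq> []" using len by auto
  define A where "A = {m. m < length ts \<and> ts ! m < t}"
  have finA: "finite A" unfolding A_def by simp
  have "0 \<in> A" unfolding A_def using len hd assms(2) ne by (auto simp: hd_conv_nth)
  hence neA: "A \<noteq> {}" by blast
  define m where "m = Max A"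
  have mA: "m \<in> A" unfolding m_def using finA neA by simp
  have mmax: "\<And>j. j \<in> A \<Longrightarrow> j \<le> m" unfolding m_def using finA by simp
  have lastn: "ts ! (length ts - 1) = 1" using la ne by (simp add: last_conv_nth)
  have "m \<noteq> length ts - 1" using mA lastn assms(3) unfolding A_def by auto
  hence sm: "Suc m < length ts" using mA unfolding A_def by auto
  have "Suc m \<notin> A" using mmax by fastforce
  hence ge: "ts ! Suc m \<ge> t" using sm unfolding A_def by auto
  have "ts ! Suc m \<noteq> t" using assms(4) sm nth_mem by metis
  thus ?thesis using ge sm mA unfolding A_def by (intro exI[of _ m]) auto
qed

lemma Xt_diff:
  assumes "interval_partition ts" "f \<in> Xt_space p ts" "t \<in> {0<..<1}" "t \<notin> set ts"
  shows "\<exists>D. (f has_real_derivative D) (at t)"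
proof -
  obtain m where m: "Suc m < length ts" "ts ! m < t" "t < ts ! Suc m"
    using part_locate[OF assms(1)] assms(3,4) by auto
  have m1: "m < length ts - 1" using m(1) by simp
  obtain q :: "real poly" where q: "\<forall>s \<in> {ts!m <..< ts!(Suc m)}. f s = poly q s"
    using assms(2) m1 unfolding Xt_space_def pw_poly_1d_def by blast
  have "(f has_real_derivative poly (pderiv q) t) (at t)"
  proof (rule has_field_derivative_transform_within_open[OF poly_DERIV])
    show "open {ts!m <..< ts!(Suc m)}" by simp
    show "t \<in> {ts!m <..< ts!(Suc m)}" using m by simp
    show "poly q s = f s" if "s \<in> {ts!m <..< ts!(Suc m)}" for s using q that by simp
  qed
  thus ?thesis by blast
qed

lemma TP_inst:
  assumes part: "interval_partition ts" and lb: "lagrange_basis {0..1} (Xt_space pt ts) Nt \<phi>"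
    and Y: "Yt \<subseteq> L2I"
    and h1: "\<forall>f \<in> Xt_space pt ts. \<exists>g\<in>Yt. AE t in lborel. t \<in> {0<..<1} \<longrightarrow> f t = g t"
    and h2: "\<forall>f \<in> Xt_space pt ts. \<exists>g\<in>Yt. AE t in lborel. t \<in> {0<..<1} \<longrightarrow> deriv f t = g t"
    and ob: "L2I_orthogonal_basis Yt Mt \<xi>"
    and inv: "\<forall>i<Mt. \<forall>j<Mt. mmul Mt Oinv (\<lambda>i j. l2I (\<xi> j) (\<xi> i)) i j = (if i = j then 1 else 0)"
  shows "TP Nt \<phi> (set ts) Mt \<xi> Oinv"
proof -
  have X: "\<phi> i \<in> Xt_space pt ts" if "i < Nt" for i using lb that unfolding lagrange_basis_def by blast
  have inY: "\<xi> j \<in> Yt" if "j < Mt" for j using ob that unfolding L2I_orthogonal_basis_def by blast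
  have spanY: "\<forall>f\<in>Yt. \<exists>a. AE t in lborel. t \<in> {0<..<1} \<longrightarrow> f t = (\<Sum>j<Mt. a j * \<xi> j t)"
    using ob unfolding L2I_orthogonal_basis_def by blast
  have L2: "\<xi> j \<in> L2I" if "j < Mt" for j using Y inY[OF that] by blast
  show ?thesis
  proof
    show "finite (set ts)" by simp
    show "continuous_on {0<..<1} (\<phi> i)" if "i < Nt" for i
      using X[OF that] unfolding Xt_space_def by (auto intro: continuous_on_subset)
    show "\<exists>D. (\<phi> i has_real_derivative D) (at t)" if "i < Nt" "t \<in> {0<..<1}" "t \<notin> set ts" for i t
      using Xt_diff[OF part X[OF that(1)] that(2,3)] .
    show "set_borel_measurable lborel {0<..<1} (\<xi> j)" if "j < Mt" for j
      using L2[OF that] unfolding L2I_def by blast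
    show "set_integrable lborel {0<..<1} (\<lambda>t. (\<xi> j t)\<^sup>2)" if "j < Mt" for j
      using L2[OF that] unfolding L2I_def by blast
    show "l2I (\<xi> j) (\<xi> j') = 0" if "j < Mt" "j' < Mt" "j \<noteq> j'" for j j'
      using ob that unfolding L2I_orthogonal_basis_def by blast
    show "\<exists>a. AE t in lborel. t \<in> {0<..<1} \<longrightarrow> \<phi> i t = (\<Sum>j<Mt. a j * \<xi> j t)" if i: "i < Nt" for i
    proof -
      obtain g where g: "g \<in> Yt" "AE t in lborel. t \<in> {0<..<1} \<longrightarrow> \<phi> i t = g t" using h1 X[OF i] by blast
      obtain a where a: "AE t in lborel. t \<in> {0<..<1} \<longrightarrow> g t = (\<Sum>j<Mt. a j * \<xi> j t)" using spanY g(1) by blast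
      have "AE t in lborel. t \<in> {0<..<1} \<longrightarrow> \<phi> i t = (\<Sum>j<Mt. a j * \<xi> j t)"
        using g(2) a by eventually_elim auto
      thus ?thesis by blast
    qed
    show "\<exists>a. AE t in lborel. t \<in> {0<..<1} \<longrightarrow> deriv (\<phi> i) t = (\<Sum>j<Mt. a j * \<xi> j t)" if i: "i < Nt" for i
    proof -
      obtain g where g: "g \<in> Yt" "AE t in lborel. t \<in> {0<..<1} \<longrightarrow> deriv (\<phi> i) t = g t" using h2 X[OF i] by blast
      obtain a where a: "AE t in lborel. t \<in> {0<..<1} \<longrightarrow> g t = (\<Sum>j<Mt. a j * \<xi> j t)" using spanY g(1) by blast
      have "AE t in lborel. t \<in> {0<..<1} \<longrightarrow> deriv (\<phi> i) t = (\<Sum>j<Mt. a j * \<xi> j t)"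
        using g(2) a by eventually_elim auto
      thus ?thesis by blast
    qed
    show "(\<Sum>m<Mt. Oinv j m * l2I (\<xi> j') (\<xi> m)) = (if j = j' then 1 else 0)" if "j < Mt" "j' < Mt" for j j'
      using inv that unfolding mmul_def by simp
  qed
qed

theorem mainTheorem2:
  fixes \<Omega> :: "(real^'d) set" and T :: "(real^'d) set set"
    and D :: "real^'d^'d" and c :: real
    and pt px :: nat and ts :: "real list"
    and Nt Nx Mt :: nat
    and \<phi> :: "nat \<Rightarrow> real \<Rightarrow> real" and \<psi> :: "nat \<Rightarrow> real^'d \<Rightarrow> real"
    and Yt :: "(real \<Rightarrow> real) set" and \<xi> :: "nat \<Rightarrow> real \<Rightarrow> real"
    and Kx Oinv :: "nat \<Rightarrow> nat \<Rightarrow> real"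
  defines "Omat \<equiv> (\<lambda>i j. l2I (\<xi> j) (\<xi> i))"
    and "S \<equiv> (\<lambda>(i, k) (i', k'). Sdelta \<Omega> D c Mt Nx Oinv Kx \<xi> \<psi>
                 (tens (\<phi> i') (\<psi> k')) (tens (\<phi> i) (\<psi> k)))"
    and "L \<equiv> (\<lambda>i j. l2I (deriv (\<phi> j)) (\<phi> i))"
    and "Mt_mat \<equiv> (\<lambda>i j. l2I (\<phi> j) (\<phi> i))"
    and "At \<equiv> (\<lambda>i j. l2I (deriv (\<phi> j)) (deriv (\<phi> i)))"
    and "\<Gamma>0 \<equiv> (\<lambda>i j. \<phi> i 0 * \<phi> j 0)"
    and "Mx \<equiv> (\<lambda>k l. l2O \<Omega> (\<psi> l) (\<psi> k))"
    and "Ax \<equiv> (\<lambda>k l. aform \<Omega> D c (\<psi> l) (\<psi> k))"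
  assumes "bounded \<Omega>" and "lipschitz_domain \<Omega>"
    and "transpose D = D" and "\<forall>x. x \<noteq> 0 \<longrightarrow> x \<bullet> (D *v x) > 0"
    and "c \<ge> 0"
    and "interval_partition ts" and "conforming_triangulation \<Omega> T"
    and "lagrange_basis {0..1} (Xt_space pt ts) Nt \<phi>"
    and "lagrange_basis (closure \<Omega>) (Xx_space \<Omega> T px) Nx \<psi>"
    and "Yt \<subseteq> L2I"
    and "\<forall>f \<in> Xt_space pt ts. \<exists>g\<in>Yt. AE t in lborel. t \<in> {0<..<1} \<longrightarrow> f t = g t"
    and "\<forall>f \<in> Xt_space pt ts. \<exists>g\<in>Yt. AE t in lborel. t \<in> {0<..<1} \<longrightarrow> deriv f t = g t"
    and "L2I_orthogonal_basis Yt Mt \<xi>"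
    and "\<forall>k<Nx. \<forall>l<Nx. Kx k l = Kx l k"
    and "\<forall>v. (\<exists>k<Nx. v k \<noteq> 0) \<longrightarrow> (\<Sum>k<Nx. \<Sum>l<Nx. v k * Kx k l * v l) > 0"
    and "\<forall>i<Mt. \<forall>j<Mt. mmul Mt Omat Oinv i j = (if i = j then 1 else 0)"
    and "\<forall>i<Mt. \<forall>j<Mt. mmul Mt Oinv Omat i j = (if i = j then 1 else 0)"
  shows "\<forall>i<Nt. \<forall>k<Nx. \<forall>i'<Nt. \<forall>k'<Nx.
     S (i, k) (i', k') =
        kron At (mmul Nx (mmul Nx Mx Kx) Mx) (i, k) (i', k')
      + kron Mt_mat (mmul Nx (mmul Nx Ax Kx) Ax) (i, k) (i', k')
      + kron (mtrans L) (mmul Nx (mmul Nx Mx Kx) Ax) (i, k) (i', k')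
      + kron L (mmul Nx (mmul Nx Ax Kx) Mx) (i, k) (i', k')
      + kron \<Gamma>0 Mx (i, k) (i', k')"
proof -
  have sp: "SP \<Omega> Nx \<psi>"
    using SP_inst[OF assms(9,10,15)] assms(17) unfolding lagrange_basis_def by blast
  have tp: "TP Nt \<phi> (set ts) Mt \<xi> Oinv"
    using TP_inst[OF assms(14,16,18,19,20,21), of Oinv] assms(25) unfolding Omat_def by blast
  interpret BF \<Omega> D c Nx \<psi> Nt \<phi> "set ts" Mt \<xi> Oinv
    using sp tp by (simp add: BF_def)
  show ?thesis
    unfolding S_def L_def Mt_mat_def At_def \<Gamma>0_def Mx_def Ax_def
    using S_formula[OF _ _ _ _ assms(11)] by auto
qed


end
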